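(* Let $R$ be an integral domain with a language $\mathcal{L}$ which is the language of rings $\{0,1,+,\cdot\}$ possibly with extra constants and relations, and suppose Hilbert's tenth problem over $(R,\mathcal{L})$ has a positive answer. Let $K$ be the fraction field of $R$, $\overline K$ its algebraic closure, and let $\alpha\in\overline K$ be integral over $R$ with minimal equation having coefficients in $R_0=S_c'(\mathcal{L})$. Let $\mathcal{L}_\alpha=\mathcal{L}\cup\{c_\alpha,\mathrm{In}R\}$ with $c_\alpha$ a constant and $\mathrm{In}R$ a unary relation, interpreted on $R[\alpha]$ by: $+,\cdot$ the usual operations; each constant $c$ of $\mathcal{L}$ as in $R$; each relation $S$ of $\mathcal{L}$ as the same set as in $R$; $c_\alpha$ as $\alpha$; and $\mathrm{In}R(x)$ iff $x\in R$. Then Hilbert's tenth problem over $(R[\alpha],\mathcal{L}_\alpha)$ has a positive answer.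
   Context: For a set $R$ with language $\mathcal{L}$ (constants, functions, relations incl. $0$ and $=$), a basic formula has the form $(t_1,\dots,t_m)\in S$ with $S$ a relation of $\mathcal{L}$ or equality and $t_j$ terms built from constants and variables via the functions; $S\subset R^k$ is Diophantine if $S=\{\vec x\mid\exists\vec y\ (f_1\wedge\dots\wedge f_r)\}$ for basic formulas $f_i$. $S_c'(\mathcal{L})=\{x\in R\mid\{x\}\text{ is Diophantine}\}$. Hilbert's tenth problem has a positive answer over $(R,\mathcal{L})$ if there is an algorithm that decides, for any finite conjunction of basic formulas with coefficients from $S_c'(\mathcal{L})$ (given via a recursive ring of such coefficients), whether it has a solution in $R$. *)

theory Defs
  imports "HOL-Computational_Algebra.Polynomial" "HOL-Library.Nat_Bijection"
begin

datatype recf = Zr | Sc | Proj nat | Comp recf "recf list" | Prim recf recf | Mn recf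

inductive rf_eval :: "recf \<Rightarrow> nat list \<Rightarrow> nat \<Rightarrow> bool" where
  zr: "rf_eval Zr xs 0"
| sc: "rf_eval Sc (x # xs) (Suc x)"
| proj: "i < length xs \<Longrightarrow> rf_eval (Proj i) xs (xs ! i)"
| comp: "list_all2 (\<lambda>g y. rf_eval g xs y) gs ys \<Longrightarrow> rf_eval f ys z \<Longrightarrow> rf_eval (Comp f gs) xs z"
| prim0: "rf_eval f xs y \<Longrightarrow> rf_eval (Prim f g) (0 # xs) y"
| primS: "rf_eval (Prim f g) (n # xs) y \<Longrightarrow> rf_eval g (n # y # xs) z
           \<Longrightarrow> rf_eval (Prim f g) (Suc n # xs) z"
| mn: "rf_eval f (n # xs) 0 \<Longrightarrow> (\<forall>m<n. \<exists>y. 0 < y \<and> rf_eval f (m # xs) y)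
           \<Longrightarrow> rf_eval (Mn f) xs n"

definition decidable_nat_set :: "nat set \<Rightarrow> bool" where
  "decidable_nat_set D \<longleftrightarrow> (\<exists>c. \<forall>n. rf_eval c [n] (if n \<in> D then 1 else 0))"

datatype tm = Var nat | TZero | TOne | Cst nat | Add tm tm | Mul tm tm

datatype bf = Eq tm tm | Rel nat "tm list"

primrec tm_eval :: "(nat \<Rightarrow> 'a::comm_ring_1) \<Rightarrow> (nat \<Rightarrow> 'a) \<Rightarrow> tm \<Rightarrow> 'a" where
  "tm_eval cst v (Var n) = v n"
| "tm_eval cst v TZero = 0"
| "tm_eval cst v TOne = 1"
| "tm_eval cst v (Cst i) = cst i"
| "tm_eval cst v (Add s t) = tm_eval cst v s + tm_eval cst v t"
| "tm_eval cst v (Mul s t) = tm_eval cst v s * tm_eval cst v t"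

fun bf_holds :: "(nat \<Rightarrow> 'a::comm_ring_1) \<Rightarrow> (nat \<Rightarrow> 'a list set) \<Rightarrow> (nat \<Rightarrow> 'a) \<Rightarrow> bf \<Rightarrow> bool" where
  "bf_holds cst rel v (Eq s t) \<longleftrightarrow> tm_eval cst v s = tm_eval cst v t"
| "bf_holds cst rel v (Rel r ts) \<longleftrightarrow> map (tm_eval cst v) ts \<in> rel r"

definition solvable :: "'a::comm_ring_1 set \<Rightarrow> (nat \<Rightarrow> 'a) \<Rightarrow> (nat \<Rightarrow> 'a list set) \<Rightarrow> bf list \<Rightarrow> bool" where
  "solvable A cst rel fs \<longleftrightarrow> (\<exists>v. (\<forall>n. v n \<in> A) \<and> (\<forall>f\<in>set fs. bf_holds cst rel v f))"

primrec enc_tm :: "tm \<Rightarrow> nat" where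
  "enc_tm (Var n) = list_encode [0, n]"
| "enc_tm TZero = list_encode [1]"
| "enc_tm TOne = list_encode [2]"
| "enc_tm (Cst i) = list_encode [3, i]"
| "enc_tm (Add s t) = list_encode [4, enc_tm s, enc_tm t]"
| "enc_tm (Mul s t) = list_encode [5, enc_tm s, enc_tm t]"

fun enc_bf :: "bf \<Rightarrow> nat" where
  "enc_bf (Eq s t) = list_encode [0, enc_tm s, enc_tm t]"
| "enc_bf (Rel r ts) = list_encode (1 # r # map enc_tm ts)"

definition enc_sys :: "bf list \<Rightarrow> nat" where
  "enc_sys fs = list_encode (map enc_bf fs)"

definition H10_positive :: "'a::comm_ring_1 set \<Rightarrow> (nat \<Rightarrow> 'a) \<Rightarrow> (nat \<Rightarrow> 'a list set) \<Rightarrow> bool" where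
  "H10_positive A cst rel \<longleftrightarrow> decidable_nat_set {enc_sys fs | fs. solvable A cst rel fs}"

definition Sc' :: "'a::comm_ring_1 set \<Rightarrow> (nat \<Rightarrow> 'a) \<Rightarrow> (nat \<Rightarrow> 'a list set) \<Rightarrow> 'a set" where
  "Sc' A cst rel = {x \<in> A. \<exists>fs. \<forall>y\<in>A. (y = x \<longleftrightarrow>
      (\<exists>v. (\<forall>n. v n \<in> A) \<and> v 0 = y \<and> (\<forall>f\<in>set fs. bf_holds cst rel v f)))}"

definition frac_field :: "'a::field set \<Rightarrow> 'a set" where
  "frac_field R = {a / b | a b. a \<in> R \<and> b \<in> R \<and> b \<noteq> 0}"

definition adjoin :: "'a::field set \<Rightarrow> 'a \<Rightarrow> 'a set" where
  "adjoin R \<alpha> = {poly p \<alpha> | p. \<forall>i. coeff p i \<in> R}"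

text \<open>Constant 0 of L_alpha is c_alpha; constant Suc i is the i-th constant of L.\<close>
definition cst_alpha :: "'a \<Rightarrow> (nat \<Rightarrow> 'a) \<Rightarrow> nat \<Rightarrow> 'a" where
  "cst_alpha \<alpha> cst i = (case i of 0 \<Rightarrow> \<alpha> | Suc j \<Rightarrow> cst j)"

text \<open>Relation 0 of L_alpha is InR; relation Suc i is the i-th relation of L.\<close>
definition rel_alpha :: "'a set \<Rightarrow> (nat \<Rightarrow> 'a list set) \<Rightarrow> nat \<Rightarrow> 'a list set" where
  "rel_alpha R rel i = (case i of 0 \<Rightarrow> {[x] | x. x \<in> R} | Suc j \<Rightarrow> rel j)"

end

theory Submission
  imports Defs
begin


definition rc :: "nat \<Rightarrow> (nat list \<Rightarrow> nat) \<Rightarrow> bool" where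
  "rc k f \<longleftrightarrow> (\<exists>c. \<forall>xs. length xs = k \<longrightarrow> rf_eval c xs (f xs))"

lemma rc_cong: "rc k f \<Longrightarrow> (\<And>xs. length xs = k \<Longrightarrow> f xs = g xs) \<Longrightarrow> rc k g"
  unfolding rc_def by metis

lemma rc_zero: "rc k (\<lambda>xs. 0)"
  unfolding rc_def using rf_eval.zr by blast

lemma rc_proj: "i < k \<Longrightarrow> rc k (\<lambda>xs. xs ! i)"
  unfolding rc_def using rf_eval.proj by (metis)

lemma rc_comp:
  assumes "rc (length gs) h" "\<forall>g\<in>set gs. rc k g"
  shows "rc k (\<lambda>xs. h (map (\<lambda>g. g xs) gs))"
proof -
  have "\<exists>cs. list_all2 (\<lambda>c g. \<forall>xs. length xs = k \<longrightarrow> rf_eval c xs (g xs)) cs gs"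
    using assms(2)
  proof (induction gs)
    case Nil then show ?case by auto
  next
    case (Cons g gs)
    then obtain cs where "list_all2 (\<lambda>c g. \<forall>xs. length xs = k \<longrightarrow> rf_eval c xs (g xs)) cs gs" by auto
    moreover obtain c where "\<forall>xs. length xs = k \<longrightarrow> rf_eval c xs (g xs)" using Cons.prems rc_def by auto
    ultimately show ?case by (intro exI[of _ "c # cs"]) auto
  qed
  then obtain cs where cs: "list_all2 (\<lambda>c g. \<forall>xs. length xs = k \<longrightarrow> rf_eval c xs (g xs)) cs gs" by auto
  obtain ch where ch: "\<forall>ys. length ys = length gs \<longrightarrow> rf_eval ch ys (h ys)" using assms(1) rc_def by auto
  show ?thesis unfolding rc_def
  proof (intro exI[of _ "Comp ch cs"] allI impI)
    fix xs :: "nat list" assume "length xs = k"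
    then have "list_all2 (\<lambda>c y. rf_eval c xs y) cs (map (\<lambda>g. g xs) gs)"
      using cs by (auto simp: list_all2_map2 elim: list_all2_mono)
    moreover have "rf_eval ch (map (\<lambda>g. g xs) gs) (h (map (\<lambda>g. g xs) gs))" using ch by simp
    ultimately show "rf_eval (Comp ch cs) xs (h (map (\<lambda>g. g xs) gs))" by (rule rf_eval.comp)
  qed
qed

lemma rc_comp1: "rc 1 h \<Longrightarrow> rc k f \<Longrightarrow> rc k (\<lambda>xs. h [f xs])"
  using rc_comp[of "[f]" h k] by simp

lemma rc_comp2: "rc 2 h \<Longrightarrow> rc k f \<Longrightarrow> rc k g \<Longrightarrow> rc k (\<lambda>xs. h [f xs, g xs])"
  using rc_comp[of "[f,g]" h k] by (simp add: numeral_2_eq_2)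

lemma rc_Suc1: "rc 1 (\<lambda>xs. Suc (xs ! 0))"
  unfolding rc_def
proof (intro exI[of _ Sc] allI impI)
  fix xs :: "nat list" assume "length xs = 1"
  then obtain x where "xs = [x]" by (cases xs) auto
  then show "rf_eval Sc xs (Suc (xs ! 0))" using rf_eval.sc by simp
qed

lemma rc_Suc: "rc k f \<Longrightarrow> rc k (\<lambda>xs. Suc (f xs))"
  using rc_comp1[OF rc_Suc1] by simp

lemma rc_const: "rc k (\<lambda>xs. c)"
  by (induction c) (auto intro: rc_zero rc_Suc)

fun PR :: "(nat list \<Rightarrow> nat) \<Rightarrow> (nat list \<Rightarrow> nat) \<Rightarrow> nat \<Rightarrow> nat list \<Rightarrow> nat" where
  "PR f g 0 ys = f ys"
| "PR f g (Suc n) ys = g (n # PR f g n ys # ys)"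

lemma rc_prim:
  assumes "rc k f" "rc (Suc (Suc k)) g"
  shows "rc (Suc k) (\<lambda>xs. PR f g (hd xs) (tl xs))"
proof -
  obtain cf where cf: "\<forall>xs. length xs = k \<longrightarrow> rf_eval cf xs (f xs)" using assms(1) rc_def by auto
  obtain cg where cg: "\<forall>xs. length xs = Suc (Suc k) \<longrightarrow> rf_eval cg xs (g xs)" using assms(2) rc_def by auto
  have *: "length ys = k \<Longrightarrow> rf_eval (Prim cf cg) (n # ys) (PR f g n ys)" for n ys
  proof (induction n)
    case 0 then show ?case using cf rf_eval.prim0 by simp
  next
    case (Suc n) then show ?case using cg rf_eval.primS by simp
  qed
  show ?thesis unfolding rc_def
  proof (intro exI[of _ "Prim cf cg"] allI impI)
    fix xs :: "nat list" assume "length xs = Suc k"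
    then show "rf_eval (Prim cf cg) xs (PR f g (hd xs) (tl xs))" using * by (cases xs) auto
  qed
qed

lemma rc_mn:
  assumes "rc (Suc k) f" "\<And>ys. length ys = k \<Longrightarrow> \<exists>n. f (n # ys) = 0"
  shows "rc k (\<lambda>ys. LEAST n. f (n # ys) = 0)"
proof -
  obtain cf where cf: "\<forall>xs. length xs = Suc k \<longrightarrow> rf_eval cf xs (f xs)" using assms(1) rc_def by auto
  show ?thesis unfolding rc_def
  proof (intro exI[of _ "Mn cf"] allI impI)
    fix ys :: "nat list" assume l: "length ys = k"
    define n where "n = (LEAST n. f (n # ys) = 0)"
    have f0: "f (n # ys) = 0" unfolding n_def using assms(2)[OF l] by (rule LeastI_ex)
    have "rf_eval cf (n # ys) (f (n # ys))" using cf l by simp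
    then have a: "rf_eval cf (n # ys) 0" using f0 by simp
    have b: "\<forall>m<n. \<exists>y. 0 < y \<and> rf_eval cf (m # ys) y"
    proof (intro allI impI)
      fix m assume "m < n"
      then have "f (m # ys) \<noteq> 0" unfolding n_def using not_less_Least by blast
      then show "\<exists>y. 0 < y \<and> rf_eval cf (m # ys) y" using cf l by (intro exI[of _ "f (m # ys)"]) auto
    qed
    show "rf_eval (Mn cf) ys n" using rf_eval.mn[OF a b] .
  qed
qed

lemma rc_prim_eq:
  assumes "rc k f" "rc (Suc (Suc k)) g" "\<And>n ys. length ys = k \<Longrightarrow> h (n # ys) = PR f g n ys"
  shows "rc (Suc k) h"
  using rc_prim[OF assms(1,2)] by (rule rc_cong) (metis assms(3) length_Suc_conv list.sel(1,3))

lemma rc_add2: "rc 2 (\<lambda>xs. xs ! 0 + xs ! 1)"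
proof -
  have "PR (\<lambda>ys. ys ! 0) (\<lambda>zs. Suc (zs ! 1)) n ys = n + ys ! 0" for n ys
    by (induction n) auto
  then have "rc (Suc 1) (\<lambda>xs. xs ! 0 + xs ! 1)"
    by (intro rc_prim_eq[of 1 "\<lambda>ys. ys ! 0" "\<lambda>zs. Suc (zs ! 1)"]) (auto intro: rc_proj rc_Suc)
  then show ?thesis by (simp add: numeral_2_eq_2)
qed

lemma rc_mult2: "rc 2 (\<lambda>xs. xs ! 0 * xs ! 1)"
proof -
  have "PR (\<lambda>ys. 0) (\<lambda>zs. zs ! 1 + zs ! 2) n ys = n * ys ! 0" for n ys
    by (induction n) auto
  then have "rc (Suc 1) (\<lambda>xs. xs ! 0 * xs ! 1)"
    by (intro rc_prim_eq[of 1 "\<lambda>ys. 0" "\<lambda>zs. zs ! 1 + zs ! 2"])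
       (auto intro!: rc_proj rc_zero rc_comp2[OF rc_add2, simplified])
  then show ?thesis by (simp add: numeral_2_eq_2)
qed

lemma rc_pred1: "rc 1 (\<lambda>xs. xs ! 0 - 1)"
proof -
  have "PR (\<lambda>ys. 0) (\<lambda>zs. zs ! 0) n ys = n - 1" for n ys
    by (induction n) auto
  then have "rc (Suc 0) (\<lambda>xs. xs ! 0 - 1)"
    by (intro rc_prim_eq[of 0 "\<lambda>ys. 0" "\<lambda>zs. zs ! 0"]) (auto intro: rc_proj rc_zero)
  then show ?thesis by simp
qed

lemma rc_sub_rev: "rc 2 (\<lambda>xs. xs ! 1 - xs ! 0)"
proof -
  have "PR (\<lambda>ys. ys ! 0) (\<lambda>zs. zs ! 1 - 1) n ys = ys ! 0 - n" for n ys
    by (induction n) auto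
  then have "rc (Suc 1) (\<lambda>xs. xs ! 1 - xs ! 0)"
    by (intro rc_prim_eq[of 1 "\<lambda>ys. ys ! 0" "\<lambda>zs. zs ! 1 - 1"])
       (auto intro!: rc_proj rc_comp1[OF rc_pred1, simplified])
  then show ?thesis by (simp add: numeral_2_eq_2)
qed

lemma rc_add: "rc k f \<Longrightarrow> rc k g \<Longrightarrow> rc k (\<lambda>xs. f xs + g xs)"
  using rc_comp2[OF rc_add2] by simp
lemma rc_mult: "rc k f \<Longrightarrow> rc k g \<Longrightarrow> rc k (\<lambda>xs. f xs * g xs)"
  using rc_comp2[OF rc_mult2] by simp
lemma rc_sub: "rc k f \<Longrightarrow> rc k g \<Longrightarrow> rc k (\<lambda>xs. f xs - g xs)"
  using rc_comp2[OF rc_sub_rev, of k g f] by simp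

definition rp :: "nat \<Rightarrow> (nat list \<Rightarrow> bool) \<Rightarrow> bool" where
  "rp k P \<longleftrightarrow> rc k (\<lambda>xs. if P xs then 1 else 0)"

lemma rp_less: "rc k f \<Longrightarrow> rc k g \<Longrightarrow> rp k (\<lambda>xs. f xs < g xs)"
  unfolding rp_def
  by (rule rc_cong[of k "\<lambda>xs. 1 - (1 - (g xs - f xs))"]) (auto intro!: rc_sub rc_const)
lemma rp_eq: "rc k f \<Longrightarrow> rc k g \<Longrightarrow> rp k (\<lambda>xs. f xs = g xs)"
  unfolding rp_def
  by (rule rc_cong[of k "\<lambda>xs. 1 - ((f xs - g xs) + (g xs - f xs))"]) (auto intro!: rc_sub rc_add rc_const)
lemma rp_not: "rp k P \<Longrightarrow> rp k (\<lambda>xs. \<not> P xs)"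
  unfolding rp_def
  by (rule rc_cong[of k "\<lambda>xs. 1 - (if P xs then 1 else 0)"]) (auto intro!: rc_sub rc_const)
lemma rp_conj: "rp k P \<Longrightarrow> rp k Q \<Longrightarrow> rp k (\<lambda>xs. P xs \<and> Q xs)"
  unfolding rp_def
  by (rule rc_cong[of k "\<lambda>xs. (if P xs then 1 else 0) * (if Q xs then 1 else 0)"]) (auto intro!: rc_mult)
lemma rp_disj: "rp k P \<Longrightarrow> rp k Q \<Longrightarrow> rp k (\<lambda>xs. P xs \<or> Q xs)"
  using rp_not[OF rp_conj[OF rp_not rp_not], of k P Q] by simp
lemma rp_neq: "rc k f \<Longrightarrow> rc k g \<Longrightarrow> rp k (\<lambda>xs. f xs \<noteq> g xs)"
  by (intro rp_not rp_eq)

lemma rc_if: "rp k P \<Longrightarrow> rc k a \<Longrightarrow> rc k b \<Longrightarrow> rc k (\<lambda>xs. if P xs then a xs else b xs)"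
  unfolding rp_def
  by (rule rc_cong[of k "\<lambda>xs. a xs * (if P xs then 1 else 0) + b xs * (1 - (if P xs then 1 else 0))"])
     (auto intro!: rc_mult rc_add rc_sub rc_const)

lemma rc_tri1: "rc 1 (\<lambda>xs. triangle (xs ! 0))"
proof -
  have "PR (\<lambda>ys. 0) (\<lambda>zs. zs ! 1 + Suc (zs ! 0)) n ys = triangle n" for n ys
    by (induction n) auto
  then have "rc (Suc 0) (\<lambda>xs. triangle (xs ! 0))"
    by (intro rc_prim_eq[of 0 "\<lambda>ys. 0" "\<lambda>zs. zs ! 1 + Suc (zs ! 0)"]) (auto intro!: rc_proj rc_zero rc_add rc_Suc)
  then show ?thesis by simp
qed

lemma rc_tri: "rc k f \<Longrightarrow> rc k (\<lambda>xs. triangle (f xs))"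
  using rc_comp1[OF rc_tri1] by simp

lemma rc_pe: "rc k f \<Longrightarrow> rc k g \<Longrightarrow> rc k (\<lambda>xs. prod_encode (f xs, g xs))"
  unfolding prod_encode_def by (auto intro!: rc_add rc_tri)



lemma triangle_mono: "x \<le> y \<Longrightarrow> triangle x \<le> triangle y"
  by (induction y) (auto simp: le_Suc_eq)

definition sd :: "nat \<Rightarrow> nat" where "sd m = (LEAST s. m < triangle (Suc s))"

lemma prod_decode_alt: "prod_decode m = (m - triangle (sd m), sd m - (m - triangle (sd m)))"
proof -
  obtain a b where ab: "prod_decode m = (a, b)" by (cases "prod_decode m")
  then have m: "m = triangle (a + b) + a"
    using prod_decode_inverse[of m] by (simp add: prod_encode_def)
  have "sd m = a + b" unfolding sd_def
  proof (rule Least_equality)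
    show "m < triangle (Suc (a + b))" using m by simp
  next
    fix y assume "m < triangle (Suc y)"
    show "a + b \<le> y"
    proof (rule ccontr)
      assume "\<not> a + b \<le> y"
      then have "triangle (Suc y) \<le> triangle (a + b)" by (intro triangle_mono) auto
      then show False using \<open>m < triangle (Suc y)\<close> m by simp
    qed
  qed
  then show ?thesis using ab m by simp
qed

lemma rc_sd1: "rc 1 (\<lambda>xs. sd (xs ! 0))"
proof -
  have "rc 1 (\<lambda>ys. LEAST n. (\<lambda>zs. if zs ! 1 < triangle (Suc (zs ! 0)) then 0 else 1) (n # ys) = (0::nat))"
    apply (rule rc_mn[where f="\<lambda>zs. if zs ! 1 < triangle (Suc (zs ! 0)) then 0 else 1" and k=1])
     apply (auto intro!: rc_if rp_less rc_proj rc_tri rc_Suc rc_const rc_add)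
    subgoal for ys by (rule exI[of _ "ys ! 0"]) simp
    done
  moreover have "\<And>P. ((if P then 0 else 1) = (0::nat)) = P" by simp
  ultimately show ?thesis by (simp add: sd_def)
qed

lemma rc_pd1: "rc k f \<Longrightarrow> rc k (\<lambda>xs. fst (prod_decode (f xs)))"
proof -
  have "rc 1 (\<lambda>xs. xs ! 0 - triangle (sd (xs ! 0)))"
    by (intro rc_sub rc_proj rc_tri rc_comp1[OF rc_sd1, simplified]) auto
  then have "rc 1 (\<lambda>xs. fst (prod_decode (xs ! 0)))" by (simp add: prod_decode_alt)
  then show "rc k f \<Longrightarrow> ?thesis" using rc_comp1 by fastforce
qed

lemma rc_pd2: "rc k f \<Longrightarrow> rc k (\<lambda>xs. snd (prod_decode (f xs)))"
proof -
  have "rc 1 (\<lambda>xs. sd (xs ! 0) - (xs ! 0 - triangle (sd (xs ! 0))))"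
    by (intro rc_sub rc_proj rc_tri rc_comp1[OF rc_sd1, simplified]) auto
  then have "rc 1 (\<lambda>xs. snd (prod_decode (xs ! 0)))" by (simp add: prod_decode_alt)
  then show "rc k f \<Longrightarrow> ?thesis" using rc_comp1 by fastforce
qed

definition cn :: "nat \<Rightarrow> nat \<Rightarrow> nat" where "cn x L = Suc (prod_encode (x, L))"
definition hdc :: "nat \<Rightarrow> nat" where "hdc L = fst (prod_decode (L - 1))"
definition tlc :: "nat \<Rightarrow> nat" where "tlc L = snd (prod_decode (L - 1))"

lemma hdc_cn[simp]: "hdc (cn x L) = x" by (simp add: hdc_def cn_def)
lemma tlc_cn[simp]: "tlc (cn x L) = L" by (simp add: tlc_def cn_def)
lemma cn_nz[simp]: "cn x L \<noteq> 0" by (simp add: cn_def)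
lemma cn_hd_tl: "L \<noteq> 0 \<Longrightarrow> cn (hdc L) (tlc L) = L"
  by (simp add: cn_def hdc_def tlc_def)
lemma cn_less1: "x < cn x L" using le_prod_encode_1[of x L] by (simp add: cn_def)
lemma cn_less2: "L < cn x L" using le_prod_encode_2[of L x] by (simp add: cn_def)
lemma cn_eq[simp]: "cn x L = cn y M \<longleftrightarrow> x = y \<and> L = M" by (simp add: cn_def)
lemma hdc_less: "L \<noteq> 0 \<Longrightarrow> hdc L < L" using cn_less1 cn_hd_tl by metis
lemma tlc_less: "L \<noteq> 0 \<Longrightarrow> tlc L < L" using cn_less2 cn_hd_tl by metis
lemma list_encode_Cons: "list_encode (x # xs) = cn x (list_encode xs)"
  by (simp add: cn_def)
lemma list_encode_Nil: "list_encode [] = 0" by simp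

lemma rc_cn: "rc k f \<Longrightarrow> rc k g \<Longrightarrow> rc k (\<lambda>xs. cn (f xs) (g xs))"
  unfolding cn_def by (intro rc_Suc rc_pe)
lemma rc_hdc: "rc k f \<Longrightarrow> rc k (\<lambda>xs. hdc (f xs))"
  unfolding hdc_def by (intro rc_pd1 rc_sub rc_const)
lemma rc_tlc: "rc k f \<Longrightarrow> rc k (\<lambda>xs. tlc (f xs))"
  unfolding tlc_def by (intro rc_pd2 rc_sub rc_const)

lemma rc_iter:
  assumes h: "rc 1 (\<lambda>xs. h (xs ! 0))" and a: "rc k a" and b: "rc k b"
  shows "rc k (\<lambda>xs. (h ^^ a xs) (b xs))"
proof -
  have "PR (\<lambda>ys. ys ! 0) (\<lambda>zs. h (zs ! 1)) n ys = (h ^^ n) (ys ! 0)" for n ys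
    by (induction n) auto
  then have "rc (Suc 1) (\<lambda>xs. (h ^^ (xs ! 0)) (xs ! 1))"
    by (intro rc_prim_eq[of 1 "\<lambda>ys. ys ! 0" "\<lambda>zs. h (zs ! 1)"])
       (auto intro!: rc_proj rc_comp1[OF h, simplified])
  then have "rc 2 (\<lambda>xs. (h ^^ (xs ! 0)) (xs ! 1))" by (simp add: numeral_2_eq_2)
  from rc_comp2[OF this a b] show ?thesis by simp
qed

definition nthc :: "nat \<Rightarrow> nat \<Rightarrow> nat" where "nthc L i = hdc ((tlc ^^ i) L)"

lemma nthc_list_encode: "i < length xs \<Longrightarrow> nthc (list_encode xs) i = xs ! i"
proof (induction xs arbitrary: i)
  case Nil then show ?case by simp
next
  case (Cons x xs) then show ?case
    by (cases i) (auto simp: nthc_def list_encode_Cons funpow_Suc_right simp del: list_encode.simps funpow.simps)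
qed

lemma rc_nthc: "rc k f \<Longrightarrow> rc k (\<lambda>xs. nthc (f xs) i)"
  unfolding nthc_def
  by (intro rc_hdc rc_iter[of tlc] rc_const) (auto intro!: rc_tlc rc_proj)

primrec histS :: "(nat list \<Rightarrow> nat) \<Rightarrow> nat \<Rightarrow> nat list \<Rightarrow> nat" where
  "histS S 0 ys = 0"
| "histS S (Suc m) ys = prod_encode (S (m # histS S m ys # ys), histS S m ys)"

definition covF :: "(nat list \<Rightarrow> nat) \<Rightarrow> nat \<Rightarrow> nat list \<Rightarrow> nat" where
  "covF S m ys = S (m # histS S m ys # ys)"

definition lk :: "nat \<Rightarrow> nat \<Rightarrow> nat \<Rightarrow> nat" where
  "lk m H a = (if a < m then fst (prod_decode (((\<lambda>x. snd (prod_decode x)) ^^ (m - Suc a)) H)) else 0)"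

lemma lk_hist: "lk m (histS S m ys) a = (if a < m then covF S a ys else 0)"
proof (induction m)
  case 0 then show ?case by (simp add: lk_def)
next
  case (Suc m)
  show ?case
  proof (cases "a < m")
    case True
    then have "Suc m - Suc a = Suc (m - Suc a)" by simp
    then show ?thesis using Suc True by (simp add: lk_def funpow_Suc_right del: funpow.simps)
  next
    case False
    then show ?thesis by (auto simp: lk_def covF_def less_Suc_eq)
  qed
qed

lemma covF_unfold: "covF S m ys = S (m # histS S m ys # ys)" by (simp add: covF_def)

lemma rc_cov:
  assumes S: "rc (Suc (Suc k)) S"
  shows "rc (Suc k) (\<lambda>xs. covF S (hd xs) (tl xs))"
proof -
  have "PR (\<lambda>ys. 0) (\<lambda>zs. prod_encode (S zs, zs ! 1)) n ys = histS S n ys" for n ys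
    by (induction n) auto
  then have H: "rc (Suc k) (\<lambda>xs. histS S (hd xs) (tl xs))"
    by (intro rc_prim_eq[of k "\<lambda>ys. 0" "\<lambda>zs. prod_encode (S zs, zs ! 1)"])
       (auto intro!: rc_zero rc_pe rc_proj S)
  define gs where "gs = (\<lambda>xs. xs ! 0) # (\<lambda>xs. histS S (hd xs) (tl xs)) # map (\<lambda>j xs. xs ! Suc j) [0..<k]"
  have "rc (Suc k) (\<lambda>xs. S (map (\<lambda>g. g xs) gs))"
    by (rule rc_comp) (auto simp: gs_def S H intro: rc_proj)
  then show ?thesis
  proof (rule rc_cong)
    fix xs :: "nat list" assume l: "length xs = Suc k"
    then obtain x ys where xs: "xs = x # ys" "length ys = k" by (cases xs) auto
    have "map (\<lambda>j. xs ! Suc j) [0..<k] = ys" using xs by (intro nth_equalityI) auto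
    then show "S (map (\<lambda>g. g xs) gs) = covF S (hd xs) (tl xs)"
      using xs by (simp add: gs_def covF_def comp_def)
  qed
qed

lemma rc_lk: "rc k m \<Longrightarrow> rc k H \<Longrightarrow> rc k a \<Longrightarrow> rc k (\<lambda>xs. lk (m xs) (H xs) (a xs))"
  unfolding lk_def
  by (intro rc_if rp_less rc_pd1 rc_iter rc_sub rc_Suc rc_const) (auto intro!: rc_pd2 rc_proj)

lemma rc_foldr_cn:
  "(\<forall>i\<in>set is. rc k (f i)) \<Longrightarrow> rc k b \<Longrightarrow> rc k (\<lambda>xs. foldr (\<lambda>i. cn (f i xs)) is (b xs))"
  by (induction "is") (auto intro!: rc_cn)

primrec sumc :: "nat list \<Rightarrow> nat" where
  "sumc [] = cn 1 0"
| "sumc (x # xs) = cn 4 (cn x (cn (sumc xs) 0))"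

lemma rc_sumc: "(\<forall>i\<in>set is. rc k (f i)) \<Longrightarrow> rc k (\<lambda>xs. sumc (map (\<lambda>i. f i xs) is))"
  by (induction "is") (auto intro!: rc_cn rc_const)

lemma foldr_cn_list_encode: "foldr (\<lambda>i. cn (f i)) is (list_encode ys) = list_encode (map f is @ ys)"
  by (induction "is") (auto simp: list_encode_Cons simp del: list_encode.simps)



section \<open>Translation (syntactic)\<close>

definition iv :: "nat \<Rightarrow> nat \<Rightarrow> nat \<Rightarrow> nat" where "iv n k i = 2 * (k * n + i)"
definition svar :: "nat \<Rightarrow> nat \<Rightarrow> nat" where "svar i j = 2 * (3 * prod_encode (i, j)) + 1"
definition evar :: "nat \<Rightarrow> nat \<Rightarrow> nat" where "evar m i = 2 * (3 * prod_encode (m, i) + 1) + 1"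

primrec sumtm :: "tm list \<Rightarrow> tm" where
  "sumtm [] = TZero"
| "sumtm (x # xs) = Add x (sumtm xs)"

primrec tr :: "nat \<Rightarrow> tm \<Rightarrow> tm list" where
  "tr n (Var k) = map (\<lambda>i. Var (iv n k i)) [0..<n]"
| "tr n TZero = map (\<lambda>i. TZero) [0..<n]"
| "tr n TOne = map (\<lambda>i. if i = 0 then TOne else TZero) [0..<n]"
| "tr n (Cst j) = (if j = 0 then map (\<lambda>i. Var (evar 1 i)) [0..<n]
                   else map (\<lambda>i. if i = 0 then Cst (j - 1) else TZero) [0..<n])"
| "tr n (Add s t) = map (\<lambda>i. Add (tr n s ! i) (tr n t ! i)) [0..<n]"
| "tr n (Mul s t) = map (\<lambda>i. sumtm (map (\<lambda>j. sumtm (map (\<lambda>l.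
       Mul (Mul (tr n s ! j) (tr n t ! l)) (Var (evar (j + l) i))) [0..<n])) [0..<n])) [0..<n]"

lemma length_tr[simp]: "length (tr n t) = n"
  by (cases t) auto

definition EQS :: "nat \<Rightarrow> tm list \<Rightarrow> bf list" where
  "EQS n ts = concat (map (\<lambda>t. map (\<lambda>i. Eq (tr n t ! i) TZero) [1..<n]) ts)"

fun trbf :: "nat \<Rightarrow> bf \<Rightarrow> bf list" where
  "trbf n (Eq s t) = map (\<lambda>i. Eq (tr n s ! i) (tr n t ! i)) [0..<n]"
| "trbf n (Rel r ts) = (if r = 0 then (if length ts = 1 then EQS n ts else [Eq TZero TOne])
                        else Rel (r - 1) (map (\<lambda>t. tr n t ! 0) ts) # EQS n ts)"

lemma enc_tm_cn:
  "enc_tm (Var k) = cn 0 (cn k 0)"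
  "enc_tm TZero = cn 1 0"
  "enc_tm TOne = cn 2 0"
  "enc_tm (Cst j) = cn 3 (cn j 0)"
  "enc_tm (Add s t) = cn 4 (cn (enc_tm s) (cn (enc_tm t) 0))"
  "enc_tm (Mul s t) = cn 5 (cn (enc_tm s) (cn (enc_tm t) 0))"
  by (simp_all add: cn_def)

lemma enc_bf_cn:
  "enc_bf (Eq s t) = cn 0 (cn (enc_tm s) (cn (enc_tm t) 0))"
  "enc_bf (Rel r ts) = cn 1 (cn r (list_encode (map enc_tm ts)))"
  by (simp_all add: cn_def)

lemma enc_sumtm: "enc_tm (sumtm xs) = sumc (map enc_tm xs)"
  by (induction xs) (auto simp: enc_tm_cn simp del: enc_tm.simps)

lemma enc_tm_inj: "enc_tm s = enc_tm t \<Longrightarrow> s = t"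
proof (induction s arbitrary: t)
qed (case_tac t; simp add: enc_tm_cn del: enc_tm.simps)+

lemma list_encode_map_inj: "(\<And>x y. f x = f y \<Longrightarrow> x = y) \<Longrightarrow> list_encode (map f xs) = list_encode (map f ys) \<Longrightarrow> xs = ys"
  by (metis inj_def list.inj_map list_encode_eq)

lemma map_enc_tm_inj: "list_encode (map enc_tm xs) = list_encode (map enc_tm ys) \<Longrightarrow> xs = ys"
  by (rule list_encode_map_inj[of enc_tm]) (auto intro: enc_tm_inj)

lemma enc_bf_inj: "enc_bf f = enc_bf g \<Longrightarrow> f = g"
  by (cases f; cases g) (auto simp: enc_bf_cn dest: enc_tm_inj map_enc_tm_inj simp del: enc_bf.simps)

lemma enc_sys_inj: "enc_sys fs = enc_sys gs \<Longrightarrow> fs = gs"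
  unfolding enc_sys_def using list_encode_map_inj[OF enc_bf_inj] by blast

definition tcode :: "nat \<Rightarrow> tm \<Rightarrow> nat" where "tcode n t = list_encode (map enc_tm (tr n t))"

lemma nthc_tcode: "i < n \<Longrightarrow> nthc (tcode n t) i = enc_tm (tr n t ! i)"
  unfolding tcode_def by (simp add: nthc_list_encode)

section \<open>Term translation on codes\<close>

definition vVar :: "nat \<Rightarrow> nat \<Rightarrow> nat" where
  "vVar n k = foldr (\<lambda>i. cn (cn 0 (cn (iv n k i) 0))) [0..<n] 0"
definition vZ :: "nat \<Rightarrow> nat" where
  "vZ n = foldr (\<lambda>i. cn (cn 1 0)) [0..<n] 0"
definition vO :: "nat \<Rightarrow> nat" where
  "vO n = foldr (\<lambda>i. cn (if i = 0 then cn 2 0 else cn 1 0)) [0..<n] 0"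
definition vCst :: "nat \<Rightarrow> nat \<Rightarrow> nat" where
  "vCst n j = (if j = 0 then foldr (\<lambda>i. cn (cn 0 (cn (evar 1 i) 0))) [0..<n] 0
                 else foldr (\<lambda>i. cn (if i = 0 then cn 3 (cn (j - 1) 0) else cn 1 0)) [0..<n] 0)"
definition vAdd :: "nat \<Rightarrow> nat \<Rightarrow> nat \<Rightarrow> nat" where
  "vAdd n A B = foldr (\<lambda>i. cn (cn 4 (cn (nthc A i) (cn (nthc B i) 0)))) [0..<n] 0"
definition vMul :: "nat \<Rightarrow> nat \<Rightarrow> nat \<Rightarrow> nat" where
  "vMul n A B = foldr (\<lambda>i. cn (sumc (map (\<lambda>j. sumc (map (\<lambda>l.
                 cn 5 (cn (cn 5 (cn (nthc A j) (cn (nthc B l) 0)))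
                         (cn (cn 0 (cn (evar (j + l) i) 0)) 0))) [0..<n])) [0..<n]))) [0..<n] 0"
definition cond1 :: "nat \<Rightarrow> bool" where "cond1 m \<longleftrightarrow> tlc m \<noteq> 0 \<and> tlc (tlc m) = 0"
definition cond2 :: "nat \<Rightarrow> (nat \<Rightarrow> nat) \<Rightarrow> bool" where
  "cond2 m F \<longleftrightarrow> tlc m \<noteq> 0 \<and> tlc (tlc m) \<noteq> 0 \<and> tlc (tlc (tlc m)) = 0 \<and> F (hdc (tlc m)) \<noteq> 0
          \<and> F (hdc (tlc (tlc m))) \<noteq> 0"

definition stepT :: "nat \<Rightarrow> nat \<Rightarrow> (nat \<Rightarrow> nat) \<Rightarrow> nat" where
  "stepT n m F =
   (if m = 0 then 0
    else if hdc m = 0 then (if cond1 m then Suc (vVar n (hdc (tlc m))) else 0)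
    else if hdc m = 1 then (if tlc m = 0 then Suc (vZ n) else 0)
    else if hdc m = 2 then (if tlc m = 0 then Suc (vO n) else 0)
    else if hdc m = 3 then (if cond1 m then Suc (vCst n (hdc (tlc m))) else 0)
    else if hdc m = 4 then (if cond2 m F then Suc (vAdd n (F (hdc (tlc m)) - 1) (F (hdc (tlc (tlc m))) - 1)) else 0)
    else if hdc m = 5 then (if cond2 m F then Suc (vMul n (F (hdc (tlc m)) - 1) (F (hdc (tlc (tlc m))) - 1)) else 0)
    else 0)"

definition ST :: "nat \<Rightarrow> nat list \<Rightarrow> nat" where
  "ST n xs = stepT n (xs ! 0) (lk (xs ! 0) (xs ! 1))"

definition Tf :: "nat \<Rightarrow> nat \<Rightarrow> nat" where "Tf n m = covF (ST n) m []"

lemma Tf_unfold: "Tf n m = stepT n m (\<lambda>a. if a < m then Tf n a else 0)"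
proof -
  have "lk m (histS (ST n) m []) = (\<lambda>a. if a < m then Tf n a else 0)"
    by (rule ext) (simp add: lk_hist Tf_def)
  then show ?thesis unfolding Tf_def covF_unfold[of "ST n"] by (simp add: ST_def)
qed

lemma rc_iv: "rc k a \<Longrightarrow> rc k (\<lambda>xs. iv n (a xs) i)"
  unfolding iv_def by (intro rc_mult rc_add rc_const)

lemma rc_ST: "rc 2 (ST n)"
  unfolding ST_def stepT_def vVar_def vZ_def vO_def vCst_def vAdd_def vMul_def cond1_def cond2_def
  by (intro rc_if rp_eq rp_not rp_conj rc_proj rc_const rc_Suc rc_foldr_cn rc_cn rc_hdc rc_tlc
        rc_lk rc_nthc rc_sub rc_sumc rc_iv ballI; simp)

lemma rc_Tf: "rc k a \<Longrightarrow> rc k (\<lambda>xs. Tf n (a xs))"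
proof -
  have "rc 1 (\<lambda>xs. covF (ST n) (hd xs) (tl xs))"
    using rc_cov[of 0 "ST n"] rc_ST by (simp add: numeral_2_eq_2)
  then have "rc 1 (\<lambda>xs. Tf n (xs ! 0))"
    by (rule rc_cong) (auto simp: Tf_def length_Suc_conv)
  then show "rc k a \<Longrightarrow> ?thesis" using rc_comp1 by fastforce
qed



lemma foldr_cn0: "foldr (\<lambda>i. cn (f i)) is 0 = list_encode (map f is)"
  using foldr_cn_list_encode[of f "is" "[]"] by simp

lemma cn_lessA: "a < cn x (cn a L)" using cn_less1[of a L] cn_less2[of "cn a L" x] by linarith
lemma cn_lessB: "b < cn x (cn a (cn b L))"
  using cn_less1[of b L] cn_less2[of "cn b L" a] cn_less2[of "cn a (cn b L)" x] by linarith

lemma Tf_enc: "0 < n \<Longrightarrow> Tf n (enc_tm t) = Suc (tcode n t)"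
proof (induction t)
  case (Var k) then show ?case
    by (subst Tf_unfold) (simp add: stepT_def vVar_def vZ_def vO_def vCst_def vAdd_def vMul_def cond1_def cond2_def enc_tm_cn tcode_def foldr_cn0 comp_def del: enc_tm.simps)
next
  case TZero then show ?case
    by (subst Tf_unfold) (simp add: stepT_def vVar_def vZ_def vO_def vCst_def vAdd_def vMul_def cond1_def cond2_def enc_tm_cn tcode_def foldr_cn0 comp_def del: enc_tm.simps)
next
  case TOne then show ?case
    by (subst Tf_unfold) (simp add: stepT_def vVar_def vZ_def vO_def vCst_def vAdd_def vMul_def cond1_def cond2_def enc_tm_cn tcode_def foldr_cn0 comp_def if_distrib[of enc_tm] del: enc_tm.simps cong: if_cong)
next
  case (Cst j) then show ?case
    by (subst Tf_unfold) (simp add: stepT_def vVar_def vZ_def vO_def vCst_def vAdd_def vMul_def cond1_def cond2_def enc_tm_cn tcode_def foldr_cn0 comp_def if_distrib[of enc_tm] del: enc_tm.simps cong: if_cong)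
next
  case (Add s t) then show ?case
    by (subst Tf_unfold) (simp add: stepT_def vVar_def vZ_def vO_def vCst_def vAdd_def vMul_def cond1_def cond2_def tcode_def cn_lessA cn_lessB enc_tm_cn foldr_cn0 comp_def del: enc_tm.simps,
      intro arg_cong[where f=list_encode] map_cong refl, simp add: nthc_list_encode enc_tm_cn enc_sumtm del: enc_tm.simps cong: map_cong)
next
  case (Mul s t) then show ?case
    by (subst Tf_unfold) (simp add: stepT_def vVar_def vZ_def vO_def vCst_def vAdd_def vMul_def cond1_def cond2_def tcode_def cn_lessA cn_lessB enc_tm_cn foldr_cn0 comp_def enc_sumtm del: enc_tm.simps,
      intro arg_cong[where f=list_encode] arg_cong[where f=sumc] map_cong refl, simp add: nthc_list_encode enc_tm_cn del: enc_tm.simps)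
qed

lemma dec1: "m \<noteq> 0 \<Longrightarrow> tlc m = 0 \<Longrightarrow> m = cn (hdc m) 0"
  by (metis cn_hd_tl)
lemma dec2: "m \<noteq> 0 \<Longrightarrow> tlc m \<noteq> 0 \<Longrightarrow> tlc (tlc m) = 0 \<Longrightarrow> m = cn (hdc m) (cn (hdc (tlc m)) 0)"
  by (metis cn_hd_tl)
lemma dec3: "m \<noteq> 0 \<Longrightarrow> tlc m \<noteq> 0 \<Longrightarrow> tlc (tlc m) \<noteq> 0 \<Longrightarrow> tlc (tlc (tlc m)) = 0 \<Longrightarrow>
   m = cn (hdc m) (cn (hdc (tlc m)) (cn (hdc (tlc (tlc m))) 0))"
  by (metis cn_hd_tl)

lemma if_nz: "(if c then Suc x else 0) \<noteq> 0 \<Longrightarrow> c" by (cases c) auto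

lemma stepT_tag:
  assumes "m \<noteq> 0"
  shows "hdc m = 0 \<Longrightarrow> stepT n m F \<noteq> 0 \<Longrightarrow> tlc m \<noteq> 0 \<and> tlc (tlc m) = 0"
    and "hdc m = 1 \<Longrightarrow> stepT n m F \<noteq> 0 \<Longrightarrow> tlc m = 0"
    and "hdc m = 2 \<Longrightarrow> stepT n m F \<noteq> 0 \<Longrightarrow> tlc m = 0"
    and "hdc m = 3 \<Longrightarrow> stepT n m F \<noteq> 0 \<Longrightarrow> tlc m \<noteq> 0 \<and> tlc (tlc m) = 0"
    and "hdc m = 4 \<or> hdc m = 5 \<Longrightarrow> stepT n m F \<noteq> 0 \<Longrightarrow> cond2 m F"
    and "hdc m > 5 \<Longrightarrow> stepT n m F = 0"
  using assms unfolding stepT_def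
  by (auto simp: cond1_def split: if_splits)

lemma Tf_valid: "Tf n m \<noteq> 0 \<Longrightarrow> \<exists>t. m = enc_tm t"
proof (induction m rule: less_induct)
  case (less m)
  have st: "stepT n m (\<lambda>a. if a < m then Tf n a else 0) \<noteq> 0"
    using less.prems by (subst (asm) Tf_unfold)
  then have m0: "m \<noteq> 0" unfolding stepT_def by (cases "m = 0") simp_all
  show ?case
  proof (cases "hdc m \<le> 3")
    case True
    then consider "hdc m = 0" | "hdc m = 1" | "hdc m = 2" | "hdc m = 3" by linarith
    then show ?thesis
    proof cases
      case 1
      then have "tlc m \<noteq> 0 \<and> tlc (tlc m) = 0" using stepT_tag[OF m0] st by simp
      then have "m = enc_tm (Var (hdc (tlc m)))" using dec2[OF m0] 1 by (simp add: enc_tm_cn del: enc_tm.simps)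
      then show ?thesis by blast
    next
      case 2
      then have "tlc m = 0" using stepT_tag[OF m0] st by simp
      then have "m = enc_tm TZero" using dec1[OF m0] 2 by (simp add: enc_tm_cn del: enc_tm.simps)
      then show ?thesis by blast
    next
      case 3
      then have "tlc m = 0" using stepT_tag[OF m0] st by simp
      then have "m = enc_tm TOne" using dec1[OF m0] 3 by (simp add: enc_tm_cn del: enc_tm.simps)
      then show ?thesis by blast
    next
      case 4
      then have "tlc m \<noteq> 0 \<and> tlc (tlc m) = 0" using stepT_tag[OF m0] st by simp
      then have "m = enc_tm (Cst (hdc (tlc m)))" using dec2[OF m0] 4 by (simp add: enc_tm_cn del: enc_tm.simps)
      then show ?thesis by blast
    qed
  next
    case False
    have h45: "hdc m = 4 \<or> hdc m = 5"
    proof (rule ccontr)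
      assume "\<not> (hdc m = 4 \<or> hdc m = 5)"
      then have "hdc m > 5" using False by linarith
      then show False using stepT_tag(6)[OF m0, of n] st by simp
    qed
    have c0: "cond2 m (\<lambda>a. if a < m then Tf n a else 0)"
      using stepT_tag(5)[OF m0 h45] st by blast
    then have c: "tlc m \<noteq> 0 \<and> tlc (tlc m) \<noteq> 0 \<and> tlc (tlc (tlc m)) = 0 \<and>
          (if hdc (tlc m) < m then Tf n (hdc (tlc m)) else 0) \<noteq> 0 \<and>
          (if hdc (tlc (tlc m)) < m then Tf n (hdc (tlc (tlc m))) else 0) \<noteq> 0"
      unfolding cond2_def by simp
    have me: "m = cn (hdc m) (cn (hdc (tlc m)) (cn (hdc (tlc (tlc m))) 0))"
      using dec3[OF m0] c by simp
    have l1: "hdc (tlc m) < m" using me cn_lessA by metis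
    have l2: "hdc (tlc (tlc m)) < m" using me cn_lessB by metis
    obtain s where s: "hdc (tlc m) = enc_tm s" using less.IH[OF l1] c l1 by auto
    obtain t where t: "hdc (tlc (tlc m)) = enc_tm t" using less.IH[OF l2] c l2 by auto
    have "m = enc_tm (Add s t) \<or> m = enc_tm (Mul s t)"
      using h45 me s t by (auto simp: enc_tm_cn simp del: enc_tm.simps)
    then show ?thesis by blast
  qed
qed



definition eqz :: "nat \<Rightarrow> nat" where "eqz x = cn 0 (cn x (cn (cn 1 0) 0))"

definition rCons :: "nat \<Rightarrow> nat \<Rightarrow> nat \<Rightarrow> nat" where
  "rCons n A X = prod_encode (cn (nthc A 0) (fst (prod_decode X)),
                              foldr (\<lambda>i. cn (eqz (nthc A i))) [1..<n] (snd (prod_decode X)))"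

definition stepR :: "nat \<Rightarrow> nat \<Rightarrow> (nat \<Rightarrow> nat) \<Rightarrow> nat \<Rightarrow> nat" where
  "stepR n L F acc =
    (if L = 0 then Suc (prod_encode (0, acc))
     else if F (tlc L) = 0 \<or> Tf n (hdc L) = 0 then 0
     else Suc (rCons n (Tf n (hdc L) - 1) (F (tlc L) - 1)))"

definition SR :: "nat \<Rightarrow> nat list \<Rightarrow> nat" where
  "SR n xs = stepR n (xs ! 0) (lk (xs ! 0) (xs ! 1)) (xs ! 2)"

definition Rf :: "nat \<Rightarrow> nat \<Rightarrow> nat \<Rightarrow> nat" where "Rf n L acc = covF (SR n) L [acc]"

lemma Rf_unfold: "Rf n L acc = stepR n L (\<lambda>a. if a < L then Rf n a acc else 0) acc"
proof -
  have "lk L (histS (SR n) L [acc]) = (\<lambda>a. if a < L then Rf n a acc else 0)"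
    by (rule ext) (simp add: lk_hist Rf_def)
  then show ?thesis unfolding Rf_def covF_unfold[of "SR n"] by (simp add: SR_def)
qed

lemma rc_SR: "rc 3 (SR n)"
  unfolding SR_def stepR_def rCons_def eqz_def
  by (intro rc_if rp_eq rp_not rp_conj rp_disj rc_proj rc_const rc_Suc rc_foldr_cn rc_cn rc_hdc rc_tlc
        rc_lk rc_nthc rc_sub rc_pe rc_pd1 rc_pd2 rc_Tf ballI; simp)

lemma rc_Rf: "rc k a \<Longrightarrow> rc k b \<Longrightarrow> rc k (\<lambda>xs. Rf n (a xs) (b xs))"
proof -
  have "rc 2 (\<lambda>xs. covF (SR n) (hd xs) (tl xs))"
    using rc_cov[of 1 "SR n"] rc_SR by (simp add: numeral_3_eq_3 numeral_2_eq_2)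
  then have "rc 2 (\<lambda>xs. Rf n (xs ! 0) (xs ! 1))"
    by (rule rc_cong) (auto simp: Rf_def length_Suc_conv numeral_2_eq_2)
  then show "rc k a \<Longrightarrow> rc k b \<Longrightarrow> ?thesis" using rc_comp2 by fastforce
qed

lemma list_encode_map_nz: "xs \<noteq> [] \<Longrightarrow> list_encode xs \<noteq> 0"
  by (cases xs) auto

lemma Rf_enc: "0 < n \<Longrightarrow> Rf n (list_encode (map enc_tm ts)) (list_encode rest) =
   Suc (prod_encode (list_encode (map (\<lambda>t. enc_tm (tr n t ! 0)) ts), list_encode (map enc_bf (EQS n ts) @ rest)))"
proof (induction ts)
  case Nil then show ?case by (subst Rf_unfold) (simp add: stepR_def EQS_def)
next
  case (Cons t ts)
  have L: "list_encode (map enc_tm (t # ts)) = cn (enc_tm t) (list_encode (map enc_tm ts))"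
    by (simp add: list_encode_Cons del: list_encode.simps)
  have "foldr (\<lambda>i. cn (eqz (nthc (tcode n t) i))) [1..<n] (list_encode (map enc_bf (EQS n ts) @ rest))
        = list_encode (map (\<lambda>i. eqz (nthc (tcode n t) i)) [1..<n] @ map enc_bf (EQS n ts) @ rest)"
    by (simp add: foldr_cn_list_encode)
  also have "map (\<lambda>i. eqz (nthc (tcode n t) i)) [1..<n] = map enc_bf (map (\<lambda>i. Eq (tr n t ! i) TZero) [1..<n])"
    by (auto simp: eqz_def nthc_tcode enc_bf_cn enc_tm_cn simp del: enc_bf.simps enc_tm.simps)
  finally have F: "foldr (\<lambda>i. cn (eqz (nthc (tcode n t) i))) [1..<n] (list_encode (map enc_bf (EQS n ts) @ rest))
        = list_encode (map enc_bf (EQS n (t # ts)) @ rest)"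
    by (simp add: EQS_def)
  show ?case
    apply (subst Rf_unfold)
    apply (simp only: L)
    using Cons F by (simp add: stepR_def cn_less2 Tf_enc rCons_def nthc_tcode list_encode_Cons del: list_encode.simps)
qed

lemma Rf_valid: "Rf n L acc \<noteq> 0 \<Longrightarrow> \<exists>ts. L = list_encode (map enc_tm ts)"
proof (induction L rule: less_induct)
  case (less L)
  show ?case
  proof (cases "L = 0")
    case True then show ?thesis by (intro exI[of _ "[]"]) simp
  next
    case False
    have st: "stepR n L (\<lambda>a. if a < L then Rf n a acc else 0) acc \<noteq> 0"
      using less.prems by (subst (asm) Rf_unfold)
    then have "Rf n (tlc L) acc \<noteq> 0" "Tf n (hdc L) \<noteq> 0"
      using False tlc_less[OF False] by (auto simp: stepR_def split: if_splits)
    then obtain ts t where "tlc L = list_encode (map enc_tm ts)" "hdc L = enc_tm t"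
      using less.IH[OF tlc_less[OF False]] Tf_valid by blast
    then have "L = list_encode (map enc_tm (t # ts))"
      using cn_hd_tl[OF False] by (simp add: list_encode_Cons del: list_encode.simps)
    then show ?thesis by blast
  qed
qed

definition BAD :: nat where "BAD = cn 0 (cn (cn 1 0) (cn (cn 2 0) 0))"

definition bRel :: "nat \<Rightarrow> nat \<Rightarrow> nat \<Rightarrow> nat \<Rightarrow> nat" where
  "bRel r L X acc = (if r = 0 then (if L \<noteq> 0 \<and> tlc L = 0 then snd (prod_decode X) else cn BAD acc)
      else cn (cn 1 (cn (r - 1) (fst (prod_decode X)))) (snd (prod_decode X)))"

definition bEq :: "nat \<Rightarrow> nat \<Rightarrow> nat \<Rightarrow> nat \<Rightarrow> nat" where
  "bEq n A B acc = foldr (\<lambda>i. cn (cn 0 (cn (nthc A i) (cn (nthc B i) 0)))) [0..<n] acc"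

definition BF :: "nat \<Rightarrow> nat \<Rightarrow> nat \<Rightarrow> nat" where
  "BF n f acc =
    (if f = 0 then 0
     else if hdc f = 0 then (if cond2 f (Tf n)
        then Suc (bEq n (Tf n (hdc (tlc f)) - 1) (Tf n (hdc (tlc (tlc f))) - 1) acc) else 0)
     else if hdc f = 1 then (if tlc f \<noteq> 0 \<and> Rf n (tlc (tlc f)) acc \<noteq> 0
        then Suc (bRel (hdc (tlc f)) (tlc (tlc f)) (Rf n (tlc (tlc f)) acc - 1) acc) else 0)
     else 0)"

lemma rc_BF: "rc k a \<Longrightarrow> rc k b \<Longrightarrow> rc k (\<lambda>xs. BF n (a xs) (b xs))"
  unfolding BF_def bRel_def bEq_def cond2_def BAD_def
  by (intro rc_if rp_eq rp_not rp_conj rp_disj rc_proj rc_const rc_Suc rc_foldr_cn rc_cn rc_hdc rc_tlc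
        rc_nthc rc_sub rc_pe rc_pd1 rc_pd2 rc_Tf rc_Rf ballI; simp)

lemma BF_enc: "0 < n \<Longrightarrow> BF n (enc_bf f) (list_encode rest) = Suc (list_encode (map enc_bf (trbf n f) @ rest))"
proof (cases f)
  case (Eq s t)
  assume n: "0 < n"
  have c: "cond2 (enc_bf f) (Tf n)"
    using n by (simp add: Eq cond2_def enc_bf_cn Tf_enc del: enc_bf.simps)
  have "bEq n (tcode n s) (tcode n t) (list_encode rest) = list_encode (map enc_bf (trbf n f) @ rest)"
    unfolding bEq_def foldr_cn_list_encode
    by (auto simp: Eq nthc_tcode enc_bf_cn simp del: enc_bf.simps intro!: arg_cong[where f=list_encode])
  then show ?thesis using c n by (simp add: BF_def Eq enc_bf_cn Tf_enc del: enc_bf.simps)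
next
  case (Rel r ts)
  assume n: "0 < n"
  have R: "Rf n (list_encode (map enc_tm ts)) (list_encode rest) \<noteq> 0" using Rf_enc[OF n] by simp
  have len1: "(list_encode (map enc_tm ts) \<noteq> 0 \<and> tlc (list_encode (map enc_tm ts)) = 0) \<longleftrightarrow> length ts = 1"
  proof (cases ts)
    case Nil then show ?thesis by simp
  next
    case (Cons t ts') then show ?thesis
      by (cases ts') (simp_all add: list_encode_Cons del: list_encode.simps(2))
  qed
  show ?thesis using R n len1
    by (simp add: BF_def Rel enc_bf_cn Rf_enc bRel_def BAD_def list_encode_Cons enc_tm_cn comp_def
        del: enc_bf.simps list_encode.simps enc_tm.simps)
qed

lemma BF_valid: "BF n f acc \<noteq> 0 \<Longrightarrow> \<exists>g. f = enc_bf g"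
proof -
  assume st: "BF n f acc \<noteq> 0"
  then have f0: "f \<noteq> 0" unfolding BF_def by (cases "f = 0") simp_all
  show ?thesis
  proof (cases "hdc f = 0")
    case True
    then have c: "cond2 f (Tf n)" using st f0 by (simp add: BF_def split: if_splits)
    then have "f = cn (hdc f) (cn (hdc (tlc f)) (cn (hdc (tlc (tlc f))) 0))"
      using dec3[OF f0] by (simp add: cond2_def)
    moreover obtain s t where "hdc (tlc f) = enc_tm s" "hdc (tlc (tlc f)) = enc_tm t"
      using c Tf_valid unfolding cond2_def by metis
    ultimately have "f = enc_bf (Eq s t)" using True by (simp add: enc_bf_cn del: enc_bf.simps)
    then show ?thesis by blast
  next
    case False
    then have h: "hdc f = 1" "tlc f \<noteq> 0" "Rf n (tlc (tlc f)) acc \<noteq> 0"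
      using st f0 by (simp_all add: BF_def split: if_splits)
    then obtain ts where "tlc (tlc f) = list_encode (map enc_tm ts)" using Rf_valid by blast
    then have "f = enc_bf (Rel (hdc (tlc f)) ts)"
      using h cn_hd_tl[OF f0] cn_hd_tl[OF h(2)] by (simp add: enc_bf_cn del: enc_bf.simps)
    then show ?thesis by blast
  qed
qed

definition stepO :: "nat \<Rightarrow> nat \<Rightarrow> nat \<Rightarrow> (nat \<Rightarrow> nat) \<Rightarrow> nat" where
  "stepO n P m F = (if m = 0 then Suc P else if F (tlc m) = 0 then 0 else BF n (hdc m) (F (tlc m) - 1))"

definition SO :: "nat \<Rightarrow> nat \<Rightarrow> nat list \<Rightarrow> nat" where
  "SO n P xs = stepO n P (xs ! 0) (lk (xs ! 0) (xs ! 1))"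

definition Out :: "nat \<Rightarrow> nat \<Rightarrow> nat \<Rightarrow> nat" where "Out n P m = covF (SO n P) m []"

lemma Out_unfold: "Out n P m = stepO n P m (\<lambda>a. if a < m then Out n P a else 0)"
proof -
  have "lk m (histS (SO n P) m []) = (\<lambda>a. if a < m then Out n P a else 0)"
    by (rule ext) (simp add: lk_hist Out_def)
  then show ?thesis unfolding Out_def covF_unfold[of "SO n P"] by (simp add: SO_def)
qed

lemma rc_Out: "rc 1 (\<lambda>xs. Out n P (xs ! 0))"
proof -
  have "rc 2 (SO n P)"
    unfolding SO_def stepO_def
    by (intro rc_if rp_eq rc_proj rc_const rc_Suc rc_hdc rc_tlc rc_lk rc_sub rc_BF; simp)
  then have "rc 1 (\<lambda>xs. covF (SO n P) (hd xs) (tl xs))"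
    using rc_cov[of 0 "SO n P"] by (simp add: numeral_2_eq_2)
  then show ?thesis by (rule rc_cong) (auto simp: Out_def length_Suc_conv)
qed

lemma Out_enc: "0 < n \<Longrightarrow> Out n (list_encode (map enc_bf pre)) (list_encode (map enc_bf fs)) =
   Suc (list_encode (map enc_bf (concat (map (trbf n) fs) @ pre)))"
proof (induction fs)
  case Nil then show ?case by (subst Out_unfold) (simp add: stepO_def)
next
  case (Cons f fs)
  have L: "list_encode (map enc_bf (f # fs)) = cn (enc_bf f) (list_encode (map enc_bf fs))"
    by (simp add: list_encode_Cons del: list_encode.simps)
  show ?case
    apply (subst Out_unfold)
    apply (simp only: L)
    using Cons by (simp add: stepO_def cn_less2 BF_enc del: list_encode.simps)
qed

lemma Out_valid: "Out n P m \<noteq> 0 \<Longrightarrow> \<exists>fs. m = list_encode (map enc_bf fs)"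
proof (induction m rule: less_induct)
  case (less m)
  show ?case
  proof (cases "m = 0")
    case True then show ?thesis by (intro exI[of _ "[]"]) simp
  next
    case False
    have st: "stepO n P m (\<lambda>a. if a < m then Out n P a else 0) \<noteq> 0"
      using less.prems by (subst (asm) Out_unfold)
    then have "Out n P (tlc m) \<noteq> 0" "BF n (hdc m) (Out n P (tlc m) - 1) \<noteq> 0"
      using False tlc_less[OF False] by (auto simp: stepO_def split: if_splits)
    then obtain fs g where "tlc m = list_encode (map enc_bf fs)" "hdc m = enc_bf g"
      using less.IH[OF tlc_less[OF False]] BF_valid by blast
    then have "m = list_encode (map enc_bf (g # fs))"
      using cn_hd_tl[OF False] by (simp add: list_encode_Cons del: list_encode.simps)
    then show ?thesis by blast
  qed
qed

theorem reduction:
  assumes n: "0 < n"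
    and dec: "decidable_nat_set {enc_sys fs | fs. Sol2 fs}"
    and bad: "\<not> Sol2 [Eq TZero TOne]"
    and equiv: "\<And>fs. Sol1 fs \<longleftrightarrow> Sol2 (concat (map (trbf n) fs) @ pre)"
  shows "decidable_nat_set {enc_sys fs | fs. Sol1 fs}"
proof -
  define P where "P = list_encode (map enc_bf pre)"
  define G where "G m = (if Out n P m = 0 then enc_sys [Eq TZero TOne] else Out n P m - 1)" for m
  have "rc 1 (\<lambda>xs. G (xs ! 0))"
    unfolding G_def by (intro rc_if rp_eq rc_Out rc_const rc_sub rc_proj; simp)
  then obtain g where g: "\<And>xs. length xs = 1 \<Longrightarrow> rf_eval g xs (G (xs ! 0))" unfolding rc_def by blast
  obtain c where c: "\<And>m. rf_eval c [m] (if m \<in> {enc_sys fs | fs. Sol2 fs} then 1 else 0)"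
    using dec unfolding decidable_nat_set_def by blast
  have key: "G m \<in> {enc_sys fs | fs. Sol2 fs} \<longleftrightarrow> m \<in> {enc_sys fs | fs. Sol1 fs}" for m
  proof (cases "Out n P m = 0")
    case True
    have "m \<notin> {enc_sys fs | fs. Sol1 fs}"
    proof
      assume "m \<in> {enc_sys fs | fs. Sol1 fs}"
      then obtain fs where "m = enc_sys fs" by blast
      then have "Out n P m \<noteq> 0" using Out_enc[OF n, of pre fs] by (simp add: P_def enc_sys_def)
      then show False using True by simp
    qed
    moreover have "G m \<notin> {enc_sys fs | fs. Sol2 fs}"
    proof
      assume "G m \<in> {enc_sys fs | fs. Sol2 fs}"
      then obtain fs where fs: "G m = enc_sys fs" "Sol2 fs" by blast
      have "G m = enc_sys [Eq TZero TOne]" using True by (simp add: G_def)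
      then have "fs = [Eq TZero TOne]" using fs(1) enc_sys_inj by metis
      then show False using fs(2) bad by simp
    qed
    ultimately show ?thesis by blast
  next
    case False
    then obtain fs where m: "m = enc_sys fs" using Out_valid unfolding enc_sys_def by blast
    then have Gm: "G m = enc_sys (concat (map (trbf n) fs) @ pre)"
      using Out_enc[OF n, of pre fs] by (simp add: G_def P_def enc_sys_def)
    have "enc_sys (concat (map (trbf n) fs) @ pre) \<in> {enc_sys fs | fs. Sol2 fs} \<longleftrightarrow> Sol2 (concat (map (trbf n) fs) @ pre)"
      using enc_sys_inj by blast
    moreover have "enc_sys fs \<in> {enc_sys fs | fs. Sol1 fs} \<longleftrightarrow> Sol1 fs"
      using enc_sys_inj by blast
    ultimately show ?thesis using Gm m equiv by simp
  qed
  have "rf_eval (Comp c [g]) [m] (if m \<in> {enc_sys fs | fs. Sol1 fs} then 1 else 0)" for m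
  proof (rule rf_eval.comp)
    show "list_all2 (\<lambda>g y. rf_eval g [m] y) [g] [G m]" using g[of "[m]"] by simp
    show "rf_eval c [G m] (if m \<in> {enc_sys fs | fs. Sol1 fs} then 1 else 0)"
      using c[of "G m"] key[of m] by simp
  qed
  then show ?thesis unfolding decidable_nat_set_def by blast
qed



locale H10setup =
  fixes R :: "'a::field set" and cst :: "nat \<Rightarrow> 'a" and rel :: "nat \<Rightarrow> 'a list set"
    and \<alpha> :: 'a and p :: "'a poly"
  assumes R0: "0 \<in> R" and R1: "1 \<in> R"
    and Radd: "\<And>x y. x \<in> R \<Longrightarrow> y \<in> R \<Longrightarrow> x + y \<in> R"
    and Rmul: "\<And>x y. x \<in> R \<Longrightarrow> y \<in> R \<Longrightarrow> x * y \<in> R"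
    and Rneg: "\<And>x. x \<in> R \<Longrightarrow> - x \<in> R"
    and cst_in: "\<And>i. cst i \<in> R"
    and rel_in: "\<And>i. rel i \<subseteq> lists R"
    and monic: "lead_coeff p = 1"
    and root: "poly p \<alpha> = 0"
    and minimal: "\<And>q. q \<noteq> 0 \<Longrightarrow> (\<forall>i. coeff q i \<in> frac_field R) \<Longrightarrow> poly q \<alpha> = 0 \<Longrightarrow> degree p \<le> degree q"
    and coeffs: "\<And>i. coeff p i \<in> Sc' R cst rel"
begin

abbreviation N where "N \<equiv> degree p"

lemma Rsub: "x \<in> R \<Longrightarrow> y \<in> R \<Longrightarrow> x - y \<in> R"
  using Radd[OF _ Rneg, of x y] by simp

lemma Rsum: "(\<And>x. x \<in> S \<Longrightarrow> f x \<in> R) \<Longrightarrow> sum f S \<in> R"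
proof (induction S rule: infinite_finite_induct)
  case (infinite A) then show ?case using R0 by simp
next
  case empty then show ?case using R0 by simp
next
  case (insert x F) then show ?case using Radd by simp
qed

lemma Rpow: "x \<in> R \<Longrightarrow> x ^ k \<in> R"
  by (induction k) (auto intro: Rmul R1)

lemma c_in: "coeff p i \<in> R"
  using coeffs[of i] unfolding Sc'_def by blast

lemma N_pos: "0 < N"
proof (rule ccontr)
  assume "\<not> 0 < N"
  then have "degree p = 0" by simp
  then have "poly p \<alpha> = lead_coeff p" by (simp add: poly_altdef)
  then show False using monic root by simp
qed

lemma alpha_N: "\<alpha> ^ N = - (\<Sum>i<N. coeff p i * \<alpha> ^ i)"
proof -
  have "poly p \<alpha> = (\<Sum>i\<le>N. coeff p i * \<alpha> ^ i)" by (rule poly_altdef)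
  also have "\<dots> = (\<Sum>i<N. coeff p i * \<alpha> ^ i) + \<alpha> ^ N"
    using monic by (simp add: lessThan_Suc_atMost[symmetric])
  finally show ?thesis using root by (simp add: eq_neg_iff_add_eq_0 add.commute)
qed

fun E :: "nat \<Rightarrow> nat \<Rightarrow> 'a" where
  "E 0 i = (if i = 0 then 1 else 0)"
| "E (Suc m) i = (if i = 0 then 0 else E m (i - 1)) - coeff p i * E m (N - 1)"

lemma E_in: "E m i \<in> R"
  by (induction m arbitrary: i) (auto intro!: Rsub Rmul Rneg c_in R0 R1)

definition rep :: "(nat \<Rightarrow> 'a) \<Rightarrow> 'a" where "rep r = (\<Sum>i<N. r i * \<alpha> ^ i)"

lemma rep_cong: "(\<And>i. i < N \<Longrightarrow> r i = s i) \<Longrightarrow> rep r = rep s"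
  unfolding rep_def by (rule sum.cong) auto

lemma rep_const: "rep (\<lambda>i. if i = 0 then x else 0) = x"
proof -
  obtain N' where "N = Suc N'" using N_pos by (cases N) auto
  then show ?thesis unfolding rep_def by (simp add: sum.lessThan_Suc_shift del: sum.lessThan_Suc)
qed

lemma rep_add: "rep (\<lambda>i. r i + s i) = rep r + rep s"
  unfolding rep_def by (simp add: sum.distrib distrib_right)

lemma rep_zero: "rep (\<lambda>i. 0) = 0"
  unfolding rep_def by simp

lemma alpha_pow: "\<alpha> ^ m = rep (E m)"
proof (induction m)
  case 0 then show ?case using rep_const[of 1] by (simp add: if_distrib cong: if_cong)
next
  case (Suc m)
  obtain N' where N: "N = Suc N'" using N_pos by (cases N) auto
  have "\<alpha> ^ Suc m = \<alpha> * rep (E m)" using Suc by simp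
  also have "\<dots> = (\<Sum>i<N. E m i * \<alpha> ^ Suc i)"
    unfolding rep_def by (simp add: sum_distrib_left mult_ac)
  also have "\<dots> = (\<Sum>i<N'. E m i * \<alpha> ^ Suc i) + E m N' * \<alpha> ^ N"
    using N by simp
  also have "\<dots> = (\<Sum>i<N'. E m i * \<alpha> ^ Suc i) - E m N' * (\<Sum>i<N. coeff p i * \<alpha> ^ i)"
    by (simp add: alpha_N)
  also have "\<dots> = rep (E (Suc m))"
  proof -
    have "rep (E (Suc m)) = (\<Sum>i<N. (if i = 0 then 0 else E m (i - 1)) * \<alpha> ^ i)
            - (\<Sum>i<N. coeff p i * E m (N - 1) * \<alpha> ^ i)"
      unfolding rep_def by (simp add: left_diff_distrib sum_subtractf)
    also have "(\<Sum>i<N. (if i = 0 then 0 else E m (i - 1)) * \<alpha> ^ i) = (\<Sum>i<N'. E m i * \<alpha> ^ Suc i)"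
      using N by (simp add: sum.lessThan_Suc_shift del: sum.lessThan_Suc)
    also have "(\<Sum>i<N. coeff p i * E m (N - 1) * \<alpha> ^ i) = E m N' * (\<Sum>i<N. coeff p i * \<alpha> ^ i)"
      unfolding sum_distrib_left using N by (intro sum.cong) (auto simp: mult_ac)
    finally show ?thesis by (rule sym)
  qed
  finally show ?case .
qed

lemma R_frac: "x \<in> R \<Longrightarrow> x \<in> frac_field R"
  unfolding frac_field_def using R1 by force

lemma rep_in: "(\<And>i. i < N \<Longrightarrow> r i \<in> R) \<Longrightarrow> rep r \<in> adjoin R \<alpha>"
proof -
  assume r: "\<And>i. i < N \<Longrightarrow> r i \<in> R"
  define q where "q = (\<Sum>i<N. monom (r i) i)"
  have cq: "coeff q j = (if j < N then r j else 0)" for j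
    unfolding q_def by (simp add: coeff_sum coeff_monom)
  have "\<forall>j. coeff q j \<in> R" using cq r R0 by simp
  moreover have "poly q \<alpha> = rep r" unfolding q_def rep_def by (simp add: poly_sum poly_monom)
  ultimately show ?thesis unfolding adjoin_def by force
qed

lemma rep_inj:
  assumes r: "\<And>i. i < N \<Longrightarrow> r i \<in> R" and s: "\<And>i. i < N \<Longrightarrow> s i \<in> R" and eq: "rep r = rep s"
  shows "i < N \<Longrightarrow> r i = s i"
proof -
  define q where "q = (\<Sum>i<N. monom (r i - s i) i)"
  have cq: "coeff q j = (if j < N then r j - s j else 0)" for j
    unfolding q_def by (simp add: coeff_sum coeff_monom)
  have "poly q \<alpha> = rep r - rep s"
    unfolding q_def rep_def by (simp add: poly_sum poly_monom left_diff_distrib sum_subtractf)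
  then have pq: "poly q \<alpha> = 0" using eq by simp
  have fq: "\<forall>j. coeff q j \<in> frac_field R" using cq r s R0 by (auto intro!: R_frac Rsub)
  have dq: "degree q \<le> N - 1" by (rule degree_le) (use N_pos in \<open>auto simp: cq\<close>)
  have "q = 0"
  proof (rule ccontr)
    assume "q \<noteq> 0"
    then have "N \<le> degree q" using minimal fq pq by blast
    then show False using dq N_pos by linarith
  qed
  then show "i < N \<Longrightarrow> r i = s i" using cq[of i] by simp
qed

lemma adjoin_rep: "x \<in> adjoin R \<alpha> \<Longrightarrow> \<exists>r. (\<forall>i. r i \<in> R) \<and> x = rep r"
proof -
  assume "x \<in> adjoin R \<alpha>"
  then obtain q where q: "x = poly q \<alpha>" "\<forall>i. coeff q i \<in> R" unfolding adjoin_def by blast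
  define r where "r i = (\<Sum>m\<le>degree q. coeff q m * E m i)" for i
  have "\<forall>i. r i \<in> R" unfolding r_def using q(2) by (auto intro!: Rsum Rmul E_in)
  moreover have "x = rep r"
  proof -
    have "x = (\<Sum>m\<le>degree q. coeff q m * \<alpha> ^ m)" using q(1) by (simp add: poly_altdef)
    also have "\<dots> = (\<Sum>m\<le>degree q. coeff q m * (\<Sum>i<N. E m i * \<alpha> ^ i))"
      by (rule sum.cong[OF refl], subst alpha_pow, simp add: rep_def)
    also have "\<dots> = (\<Sum>m\<le>degree q. \<Sum>i<N. coeff q m * E m i * \<alpha> ^ i)"
      by (simp add: sum_distrib_left mult_ac)
    also have "\<dots> = (\<Sum>i<N. \<Sum>m\<le>degree q. coeff q m * E m i * \<alpha> ^ i)"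
      by (rule sum.swap)
    also have "\<dots> = rep r"
      unfolding rep_def r_def by (simp add: sum_distrib_right)
    finally show ?thesis .
  qed
  ultimately show ?thesis by blast
qed

lemma rep_in_R:
  assumes r: "\<And>i. i < N \<Longrightarrow> r i \<in> R"
  shows "rep r \<in> R \<longleftrightarrow> (\<forall>i. 0 < i \<and> i < N \<longrightarrow> r i = 0)"
proof
  assume "rep r \<in> R"
  then have "rep r = rep (\<lambda>i. if i = 0 then rep r else 0)" using rep_const by simp
  then show "\<forall>i. 0 < i \<and> i < N \<longrightarrow> r i = 0"
    using rep_inj[OF r, where s="\<lambda>i. if i = 0 then rep r else 0"] \<open>rep r \<in> R\<close> R0 by force
next
  assume "\<forall>i. 0 < i \<and> i < N \<longrightarrow> r i = 0"
  then have "rep r = rep (\<lambda>i. if i = 0 then r 0 else 0)" by (intro rep_cong) auto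
  then show "rep r \<in> R" using rep_const r N_pos by simp
qed

end



lemma eval_sumtm: "tm_eval c w (sumtm xs) = sum_list (map (tm_eval c w) xs)"
  by (induction xs) auto

lemma sum_list_upt: "sum_list (map f [0..<n]) = (\<Sum>i<n. f i)"
  by (induction n) auto

primrec renT :: "(nat \<Rightarrow> nat) \<Rightarrow> tm \<Rightarrow> tm" where
  "renT \<sigma> (Var k) = Var (\<sigma> k)"
| "renT \<sigma> TZero = TZero"
| "renT \<sigma> TOne = TOne"
| "renT \<sigma> (Cst j) = Cst j"
| "renT \<sigma> (Add s t) = Add (renT \<sigma> s) (renT \<sigma> t)"
| "renT \<sigma> (Mul s t) = Mul (renT \<sigma> s) (renT \<sigma> t)"

fun renB :: "(nat \<Rightarrow> nat) \<Rightarrow> bf \<Rightarrow> bf" where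
  "renB \<sigma> (Eq s t) = Eq (renT \<sigma> s) (renT \<sigma> t)"
| "renB \<sigma> (Rel r ts) = Rel r (map (renT \<sigma>) ts)"

lemma eval_renT: "tm_eval c w (renT \<sigma> t) = tm_eval c (w \<circ> \<sigma>) t"
  by (induction t) auto

lemma holds_renB: "bf_holds c r w (renB \<sigma> f) = bf_holds c r (w \<circ> \<sigma>) f"
  by (cases f) (auto simp: eval_renT comp_def)

context H10setup
begin

definition good :: "(nat \<Rightarrow> 'a) \<Rightarrow> bool" where
  "good w \<longleftrightarrow> (\<forall>m \<le> 2 * N. \<forall>i<N. w (evar m i) = E m i)"

definition vA :: "(nat \<Rightarrow> 'a) \<Rightarrow> nat \<Rightarrow> 'a" where "vA w k = rep (\<lambda>i. w (iv N k i))"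

lemma tm_eval_R: "(\<And>v. w v \<in> R) \<Longrightarrow> tm_eval cst w t \<in> R"
  by (induction t) (auto intro: R0 R1 cst_in Radd Rmul)

lemma tr_sem:
  assumes g: "good w"
  shows "rep (\<lambda>i. tm_eval cst w (tr N t ! i)) = tm_eval (cst_alpha \<alpha> cst) (vA w) t"
proof (induction t)
  case (Var k) show ?case by (simp only: tm_eval.simps vA_def) (rule rep_cong, simp)
next
  case TZero
  have "rep (\<lambda>i. tm_eval cst w (tr N TZero ! i)) = rep (\<lambda>i. 0)"
    by (intro rep_cong) simp
  then show ?case using rep_zero by simp
next
  case TOne
  have "rep (\<lambda>i. tm_eval cst w (tr N TOne ! i)) = rep (\<lambda>i. if i = 0 then 1 else 0)"
    by (intro rep_cong) simp
  then show ?case using rep_const[of 1] by simp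
next
  case (Cst j)
  show ?case
  proof (cases j)
    case 0
    have "rep (\<lambda>i. tm_eval cst w (tr N (Cst j) ! i)) = rep (E 1)"
      using g N_pos 0 by (intro rep_cong) (auto simp: good_def)
    then show ?thesis using alpha_pow[of 1] 0 by (simp add: cst_alpha_def)
  next
    case (Suc j')
    have "rep (\<lambda>i. tm_eval cst w (tr N (Cst j) ! i)) = rep (\<lambda>i. if i = 0 then cst j' else 0)"
      using Suc by (intro rep_cong) simp
    then show ?thesis using rep_const[of "cst j'"] Suc by (simp add: cst_alpha_def)
  qed
next
  case (Add s t)
  have "rep (\<lambda>i. tm_eval cst w (tr N (Add s t) ! i)) =
        rep (\<lambda>i. tm_eval cst w (tr N s ! i) + tm_eval cst w (tr N t ! i))"
    by (intro rep_cong) simp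
  then show ?case using Add rep_add by simp
next
  case (Mul s t)
  define a where "a j = tm_eval cst w (tr N s ! j)" for j
  define b where "b j = tm_eval cst w (tr N t ! j)" for j
  have comp: "tm_eval cst w (tr N (Mul s t) ! i) = (\<Sum>j<N. \<Sum>l<N. a j * b l * E (j + l) i)" if i: "i < N" for i
  proof -
    have "tm_eval cst w (tr N (Mul s t) ! i) = (\<Sum>j<N. \<Sum>l<N. a j * b l * w (evar (j + l) i))"
      using i by (simp add: eval_sumtm sum_list_upt comp_def a_def b_def)
    also have "\<dots> = (\<Sum>j<N. \<Sum>l<N. a j * b l * E (j + l) i)"
      using g i by (intro sum.cong refl) (auto simp: good_def)
    finally show ?thesis .
  qed
  have "rep (\<lambda>i. tm_eval cst w (tr N (Mul s t) ! i)) = rep (\<lambda>i. \<Sum>j<N. \<Sum>l<N. a j * b l * E (j + l) i)"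
    using comp by (intro rep_cong) simp
  also have "\<dots> = (\<Sum>i<N. \<Sum>j<N. \<Sum>l<N. a j * b l * (E (j + l) i * \<alpha> ^ i))"
    unfolding rep_def by (simp add: sum_distrib_right sum_distrib_left mult_ac)
  also have "\<dots> = (\<Sum>j<N. \<Sum>i<N. \<Sum>l<N. a j * b l * (E (j + l) i * \<alpha> ^ i))"
    by (rule sum.swap)
  also have "\<dots> = (\<Sum>j<N. \<Sum>l<N. \<Sum>i<N. a j * b l * (E (j + l) i * \<alpha> ^ i))"
    by (intro sum.cong refl sum.swap)
  also have "\<dots> = (\<Sum>j<N. \<Sum>l<N. a j * b l * \<alpha> ^ (j + l))"
  proof (intro sum.cong refl)
    fix j l
    have "(\<Sum>i<N. a j * b l * (E (j + l) i * \<alpha> ^ i)) = a j * b l * rep (E (j + l))"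
      by (simp add: rep_def sum_distrib_left)
    then show "(\<Sum>i<N. a j * b l * (E (j + l) i * \<alpha> ^ i)) = a j * b l * \<alpha> ^ (j + l)"
      by (simp only: alpha_pow[symmetric])
  qed
  also have "\<dots> = rep a * rep b"
    unfolding rep_def by (simp add: sum_product power_add mult_ac)
  finally show ?case using Mul by (simp add: a_def[abs_def] b_def[abs_def])
qed

end



context H10setup
begin

lemma trbf_sem:
  assumes g: "good w" and wR: "\<And>v. w v \<in> R"
  shows "bf_holds (cst_alpha \<alpha> cst) (rel_alpha R rel) (vA w) f \<longleftrightarrow> (\<forall>h\<in>set (trbf N f). bf_holds cst rel w h)"
proof -
  define co where "co t i = tm_eval cst w (tr N t ! i)" for t i
  have coR: "co t i \<in> R" for t i unfolding co_def by (rule tm_eval_R[OF wR])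
  have val: "tm_eval (cst_alpha \<alpha> cst) (vA w) t = rep (co t)" for t
    using tr_sem[OF g, of t] by (simp add: co_def[abs_def])
  have inR: "rep (co t) \<in> R \<longleftrightarrow> (\<forall>i. 0 < i \<and> i < N \<longrightarrow> co t i = 0)" for t
    using rep_in_R[of "co t"] coR by blast
  have inR0: "(\<forall>i. 0 < i \<and> i < N \<longrightarrow> co t i = 0) \<Longrightarrow> rep (co t) = co t 0" for t
  proof -
    assume "\<forall>i. 0 < i \<and> i < N \<longrightarrow> co t i = 0"
    then have "rep (co t) = rep (\<lambda>i. if i = 0 then co t 0 else 0)" by (intro rep_cong) auto
    then show ?thesis using rep_const by simp
  qed
  have EQS_iff: "(\<forall>h\<in>set (EQS N ts). bf_holds cst rel w h) \<longleftrightarrow> (\<forall>t\<in>set ts. \<forall>i. 0 < i \<and> i < N \<longrightarrow> co t i = 0)" for ts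
    by (auto simp: EQS_def co_def)
  show ?thesis
  proof (cases f)
    case (Eq s t)
    have "rep (co s) = rep (co t) \<longleftrightarrow> (\<forall>i<N. co s i = co t i)"
      using rep_inj[of "co s" "co t"] coR rep_cong[of "co s" "co t"] by blast
    then show ?thesis using Eq by (auto simp: val co_def)
  next
    case (Rel r ts)
    show ?thesis
    proof (cases r)
      case 0
      show ?thesis
      proof (cases "length ts = 1")
        case True
        then obtain t where ts: "ts = [t]" by (cases ts) auto
        show ?thesis using Rel 0 ts EQS_iff[of "[t]"] inR[of t]
          by (simp add: rel_alpha_def val)
      next
        case False
        have "\<not> (map (tm_eval (cst_alpha \<alpha> cst) (vA w)) ts \<in> {[x] |x. x \<in> R})"
          using False by auto
        then show ?thesis using Rel 0 False by (simp add: rel_alpha_def)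
      qed
    next
      case (Suc j)
      have "map (\<lambda>t. rep (co t)) ts \<in> rel j \<longleftrightarrow>
            map (\<lambda>t. co t 0) ts \<in> rel j \<and> (\<forall>t\<in>set ts. \<forall>i. 0 < i \<and> i < N \<longrightarrow> co t i = 0)"
      proof
        assume a: "map (\<lambda>t. rep (co t)) ts \<in> rel j"
        then have "\<forall>t\<in>set ts. rep (co t) \<in> R" using rel_in[of j] by auto
        then have z: "\<forall>t\<in>set ts. \<forall>i. 0 < i \<and> i < N \<longrightarrow> co t i = 0" using inR by blast
        then have eq: "map (\<lambda>t. rep (co t)) ts = map (\<lambda>t. co t 0) ts"
          by (intro map_cong refl) (use inR0 in blast)
        show "map (\<lambda>t. co t 0) ts \<in> rel j \<and> (\<forall>t\<in>set ts. \<forall>i. 0 < i \<and> i < N \<longrightarrow> co t i = 0)"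
          using a[unfolded eq] z by blast
      next
        assume a: "map (\<lambda>t. co t 0) ts \<in> rel j \<and> (\<forall>t\<in>set ts. \<forall>i. 0 < i \<and> i < N \<longrightarrow> co t i = 0)"
        have eq: "map (\<lambda>t. rep (co t)) ts = map (\<lambda>t. co t 0) ts"
          by (intro map_cong refl) (use inR0 a in blast)
        show "map (\<lambda>t. rep (co t)) ts \<in> rel j" unfolding eq using a by blast
      qed
      moreover have m1: "map (tm_eval (cst_alpha \<alpha> cst) (vA w)) ts = map (\<lambda>t. rep (co t)) ts"
        by (intro map_cong refl) (simp add: val)
      moreover have m2: "map (tm_eval cst w) (map (\<lambda>t. tr N t ! 0) ts) = map (\<lambda>t. co t 0) ts"
        by (simp add: co_def)
      ultimately show ?thesis using Rel Suc EQS_iff[of ts]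
        by (simp add: rel_alpha_def m1 m2 del: map_map)
    qed
  qed
qed

lemma in_concat_mapI: "x \<in> set (G m) \<Longrightarrow> m \<in> set ms \<Longrightarrow> x \<in> set (concat (map G ms))"
  by auto

definition Sdef :: "nat \<Rightarrow> bf list \<Rightarrow> bool" where
  "Sdef i fs \<longleftrightarrow> (\<forall>y\<in>R. (y = coeff p i \<longleftrightarrow>
      (\<exists>v. (\<forall>n. v n \<in> R) \<and> v 0 = y \<and> (\<forall>f\<in>set fs. bf_holds cst rel v f))))"

definition fsys :: "nat \<Rightarrow> bf list" where "fsys i = (SOME fs. Sdef i fs)"

lemma fsys: "Sdef i (fsys i)"
proof -
  have "\<exists>fs. Sdef i fs" using coeffs[of i] unfolding Sc'_def Sdef_def by blast
  then show ?thesis unfolding fsys_def by (rule someI_ex)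
qed

definition eqE :: "bf list" where
  "eqE = map (\<lambda>i. Eq (Var (evar 0 i)) (if i = 0 then TOne else TZero)) [0..<N] @
         concat (map (\<lambda>m. map (\<lambda>i. Eq (Add (Var (evar (Suc m) i)) (Mul (Var (svar i 0)) (Var (evar m (N - 1)))))
                                       (if i = 0 then TZero else Var (evar m (i - 1)))) [0..<N]) [0..<2 * N])"

definition pre :: "bf list" where
  "pre = concat (map (\<lambda>i. map (renB (svar i)) (fsys i)) [0..<N]) @ eqE"

lemma pre_good:
  assumes wR: "\<And>v. w v \<in> R" and sat: "\<forall>h\<in>set pre. bf_holds cst rel w h"
  shows "good w"
proof -
  have cw: "w (svar i 0) = coeff p i" if i: "i < N" for i
  proof -
    have "\<forall>f\<in>set (fsys i). bf_holds cst rel (w \<circ> svar i) f"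
    proof
      fix f assume f: "f \<in> set (fsys i)"
      then have "renB (svar i) f \<in> set pre" using i by (auto simp: pre_def)
      then show "bf_holds cst rel (w \<circ> svar i) f" using sat holds_renB by metis
    qed
    moreover have "\<forall>n. (w \<circ> svar i) n \<in> R" using wR by simp
    ultimately have ex: "\<exists>v. (\<forall>n. v n \<in> R) \<and> v 0 = w (svar i 0) \<and> (\<forall>f\<in>set (fsys i). bf_holds cst rel v f)"
      by (intro exI[of _ "w \<circ> svar i"]) simp
    have "\<forall>y\<in>R. (y = coeff p i \<longleftrightarrow> (\<exists>v. (\<forall>n. v n \<in> R) \<and> v 0 = y \<and> (\<forall>f\<in>set (fsys i). bf_holds cst rel v f)))"
      using fsys[of i] unfolding Sdef_def .
    then show ?thesis using ex wR[of "svar i 0"] by blast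
  qed
  have e: "\<forall>h\<in>set eqE. bf_holds cst rel w h" using sat by (simp add: pre_def)
  have "\<forall>i<N. w (evar m i) = E m i" if "m \<le> 2 * N" for m
    using that
  proof (induction m)
    case 0
    show ?case
    proof (intro allI impI)
      fix i assume i: "i < N"
      have "Eq (Var (evar 0 i)) (if i = 0 then TOne else TZero) \<in> set eqE"
        using i unfolding eqE_def by simp
      then show "w (evar 0 i) = E 0 i" using e by fastforce
    qed
  next
    case (Suc m)
    show ?case
    proof (intro allI impI)
      fix i assume i: "i < N"
      have "bf_holds cst rel w (Eq (Add (Var (evar (Suc m) i)) (Mul (Var (svar i 0)) (Var (evar m (N - 1)))))
                                       (if i = 0 then TZero else Var (evar m (i - 1))))"
      proof -
        have "Eq (Add (Var (evar (Suc m) i)) (Mul (Var (svar i 0)) (Var (evar m (N - 1)))))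
                                       (if i = 0 then TZero else Var (evar m (i - 1))) \<in> set eqE"
          unfolding eqE_def set_append
          by (rule UnI2, rule in_concat_mapI[where m=m]) (use i Suc.prems in auto)
        then show ?thesis using e by blast
      qed
      then have "w (evar (Suc m) i) + coeff p i * E m (N - 1) = (if i = 0 then 0 else E m (i - 1))"
        using Suc.IH Suc.prems i cw N_pos by (auto split: if_splits)
      then show "w (evar (Suc m) i) = E (Suc m) i" by (simp add: eq_diff_eq)
    qed
  qed
  then show ?thesis unfolding good_def by blast
qed

lemma pre_ext:
  assumes w0R: "\<And>v. w0 v \<in> R"
  shows "\<exists>w. (\<forall>v. w v \<in> R) \<and> (\<forall>h\<in>set pre. bf_holds cst rel w h) \<and> (\<forall>x. even x \<longrightarrow> w x = w0 x)"
proof -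
  define V where "V i = (SOME v. (\<forall>n. v n \<in> R) \<and> v 0 = coeff p i \<and> (\<forall>f\<in>set (fsys i). bf_holds cst rel v f))" for i
  have V: "(\<forall>n. V i n \<in> R) \<and> V i 0 = coeff p i \<and> (\<forall>f\<in>set (fsys i). bf_holds cst rel (V i) f)" for i
  proof -
    have "\<exists>v. (\<forall>n. v n \<in> R) \<and> v 0 = coeff p i \<and> (\<forall>f\<in>set (fsys i). bf_holds cst rel v f)"
      using fsys[of i] c_in[of i] unfolding Sdef_def by blast
    then show ?thesis unfolding V_def by (rule someI_ex)
  qed
  define w where "w x = (if even x then w0 x
      else if ((x - 1) div 2) mod 3 = 0 then (case prod_decode (((x - 1) div 2) div 3) of (i, j) \<Rightarrow> V i j)
      else if ((x - 1) div 2) mod 3 = 1 then (case prod_decode (((x - 1) div 2) div 3) of (m, i) \<Rightarrow> E m i)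
      else 0)" for x
  have ws: "w (svar i j) = V i j" for i j by (simp add: w_def svar_def)
  have d3: "Suc (3 * k) div 3 = k" for k :: nat by presburger
  have we: "w (evar m i) = E m i" for m i by (simp add: w_def evar_def d3)
  have wR: "w v \<in> R" for v
    unfolding w_def using w0R V E_in R0 by (auto split: prod.splits)
  have s1: "\<forall>h\<in>set (concat (map (\<lambda>i. map (renB (svar i)) (fsys i)) [0..<N])). bf_holds cst rel w h"
  proof -
    have "w \<circ> svar i = V i" for i by (rule ext) (simp add: ws)
    then show ?thesis using V by (auto simp: holds_renB)
  qed
  have s2: "\<forall>h\<in>set eqE. bf_holds cst rel w h"
    unfolding eqE_def using V by (auto simp: we ws)
  show ?thesis
    by (intro exI[of _ w]) (use wR s1 s2 in \<open>auto simp: pre_def w_def\<close>)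
qed

lemma main_equiv:
  "solvable (adjoin R \<alpha>) (cst_alpha \<alpha> cst) (rel_alpha R rel) fs \<longleftrightarrow>
   solvable R cst rel (concat (map (trbf N) fs) @ pre)"
proof
  assume "solvable (adjoin R \<alpha>) (cst_alpha \<alpha> cst) (rel_alpha R rel) fs"
  then obtain v where vA: "\<forall>k. v k \<in> adjoin R \<alpha>" and vs: "\<forall>f\<in>set fs. bf_holds (cst_alpha \<alpha> cst) (rel_alpha R rel) v f"
    unfolding solvable_def by blast
  have ex: "\<forall>k. \<exists>r. (\<forall>i. r i \<in> R) \<and> v k = rep r" using vA adjoin_rep by blast
  obtain co where co0: "\<forall>k. (\<forall>i. co k i \<in> R) \<and> v k = rep (co k)" using choice[OF ex] by blast
  then have co: "\<And>k. (\<forall>i. co k i \<in> R) \<and> v k = rep (co k)" by blast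
  define w0 where "w0 x = co ((x div 2) div N) ((x div 2) mod N)" for x
  have w0R: "w0 x \<in> R" for x using co unfolding w0_def by blast
  obtain w where wR: "\<forall>v. w v \<in> R" and wp: "\<forall>h\<in>set pre. bf_holds cst rel w h"
    and we: "\<forall>x. even x \<longrightarrow> w x = w0 x"
    using pre_ext[of w0, OF w0R] by blast
  have g: "good w" by (rule pre_good) (use wR wp in blast)+
  have vv: "vA w = v"
  proof (rule ext)
    fix k
    have "vA w k = rep (co k)" unfolding vA_def
    proof (rule rep_cong)
      fix i assume i: "i < N"
      have "(k * N + i) div N = k" "(k * N + i) mod N = i" using i by auto
      then show "w (iv N k i) = co k i" using we by (simp add: iv_def w0_def)
    qed
    then show "vA w k = v k" using co by simp
  qed
  have "\<forall>h\<in>set (concat (map (trbf N) fs)). bf_holds cst rel w h"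
  proof
    fix h assume "h \<in> set (concat (map (trbf N) fs))"
    then obtain f where f: "f \<in> set fs" "h \<in> set (trbf N f)" by auto
    have "bf_holds (cst_alpha \<alpha> cst) (rel_alpha R rel) (vA w) f" using vs f(1) vv by simp
    moreover have "bf_holds (cst_alpha \<alpha> cst) (rel_alpha R rel) (vA w) f \<longleftrightarrow> (\<forall>h\<in>set (trbf N f). bf_holds cst rel w h)"
      by (rule trbf_sem[OF g]) (use wR in blast)
    ultimately show "bf_holds cst rel w h" using f(2) by blast
  qed
  then show "solvable R cst rel (concat (map (trbf N) fs) @ pre)"
    unfolding solvable_def using wR wp by (intro exI[of _ w]) auto
next
  assume "solvable R cst rel (concat (map (trbf N) fs) @ pre)"
  then obtain w where wR: "\<forall>v. w v \<in> R" and ws: "\<forall>h\<in>set (concat (map (trbf N) fs) @ pre). bf_holds cst rel w h"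
    unfolding solvable_def by blast
  have g: "good w" by (rule pre_good) (use wR ws in simp)+
  have "\<forall>k. vA w k \<in> adjoin R \<alpha>" unfolding vA_def using wR by (auto intro: rep_in)
  moreover have "\<forall>f\<in>set fs. bf_holds (cst_alpha \<alpha> cst) (rel_alpha R rel) (vA w) f"
  proof
    fix f assume f: "f \<in> set fs"
    have "\<forall>h\<in>set (trbf N f). bf_holds cst rel w h" using ws f by auto
    moreover have "bf_holds (cst_alpha \<alpha> cst) (rel_alpha R rel) (vA w) f \<longleftrightarrow> (\<forall>h\<in>set (trbf N f). bf_holds cst rel w h)"
      by (rule trbf_sem[OF g]) (use wR in blast)
    ultimately show "bf_holds (cst_alpha \<alpha> cst) (rel_alpha R rel) (vA w) f" by blast
  qed
  ultimately show "solvable (adjoin R \<alpha>) (cst_alpha \<alpha> cst) (rel_alpha R rel) fs"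
    unfolding solvable_def by blast
qed

end

theorem mainTheorem19:
  fixes R :: "'a::field set" and cst :: "nat \<Rightarrow> 'a" and rel :: "nat \<Rightarrow> 'a list set"
    and \<alpha> :: 'a and p :: "'a poly"
  assumes subring: "0 \<in> R" "1 \<in> R" "\<And>x y. x \<in> R \<Longrightarrow> y \<in> R \<Longrightarrow> x + y \<in> R"
      "\<And>x y. x \<in> R \<Longrightarrow> y \<in> R \<Longrightarrow> x * y \<in> R" "\<And>x. x \<in> R \<Longrightarrow> - x \<in> R"
    and cst_in: "\<And>i. cst i \<in> R"
    and rel_in: "\<And>i. rel i \<subseteq> lists R"
    and rel_arity: "\<And>i. \<exists>k. \<forall>xs\<in>rel i. length xs = k"
    and H10: "H10_positive R cst rel"
    and integral: "\<exists>q. lead_coeff q = 1 \<and> (\<forall>i. coeff q i \<in> R) \<and> poly q \<alpha> = 0"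
    and minpoly_monic: "lead_coeff p = 1"
    and minpoly_root: "poly p \<alpha> = 0"
    and minpoly_min: "\<And>q. q \<noteq> 0 \<Longrightarrow> (\<forall>i. coeff q i \<in> frac_field R) \<Longrightarrow> poly q \<alpha> = 0
                        \<Longrightarrow> degree p \<le> degree q"
    and minpoly_coeffs: "\<And>i. coeff p i \<in> Sc' R cst rel"
  shows "H10_positive (adjoin R \<alpha>) (cst_alpha \<alpha> cst) (rel_alpha R rel)"
proof -
  interpret H10setup R cst rel \<alpha> p
    using subring cst_in rel_in minpoly_monic minpoly_root minpoly_min minpoly_coeffs
    by unfold_locales auto
  have bad: "\<not> solvable R cst rel [Eq TZero TOne]" by (simp add: solvable_def)
  show ?thesis
    unfolding H10_positive_def
    by (rule reduction[OF N_pos H10[unfolded H10_positive_def] bad main_equiv])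
qed


end
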